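(* Let $(M,d)$ be a complete pointed metric space and $f\in\mathrm{Lip}_0(M,M)$ such that $\mathrm{int}(R_{\widehat f})\neq\emptyset$, and assume there is $C>0$ with $\mathrm{Lip}(f^n)\le C$ for all $n\in\mathbb N$. Then $R_{\widehat f}=\mathcal F(M)$. Moreover, if $M$ is separable, then $\widehat f$ is a rigid operator.
   Context: A pointed metric space is a metric space with a distinguished point $0$. $\mathrm{Lip}_0(M,M)$ denotes the Lipschitz maps $f:M\to M$ with $f(0)=0$, $\mathrm{Lip}(f)$ the least Lipschitz constant; $\mathrm{Lip}_0(M)$ the real-valued Lipschitz functions vanishing at $0$ normed by $\mathrm{Lip}$. $\delta:M\to\mathrm{Lip}_0(M)^*$, $\delta(x)(\varphi)=\varphi(x)$; $\mathcal F(M)$ is the norm-closed linear span of $\delta(M)$. $\widehat f$ is the unique bounded linear operator on $\mathcal F(M)$ with $\widehat f(\delta(x))=\delta(f(x))$. For an operator $T$, $R_T=\{\mu:\liminf_{n}\|T^n\mu-\mu\|=0\}$. A bounded linear operator $T$ on a Banach space $X$ is rigid if there is an increasing sequence $(n(j))_j\subset\mathbb N$ with $T^{n(j)}x\to x$ for every $x\in X$. *)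

theory Defs
  imports "HOL-Analysis.Analysis"
begin

definition Lip :: "('a::metric_space \<Rightarrow> 'b::metric_space) \<Rightarrow> real" where
  "Lip f = Inf {C. C-lipschitz_on UNIV f}"

definition Lip0 :: "'a::metric_space \<Rightarrow> ('a \<Rightarrow> real) set" where
  "Lip0 z = {\<phi>. \<phi> z = 0 \<and> (\<exists>C. C-lipschitz_on UNIV \<phi>)}"

definition LipMaps0 :: "'a::metric_space \<Rightarrow> ('a \<Rightarrow> 'a) set" where
  "LipMaps0 z = {f. f z = z \<and> (\<exists>C. C-lipschitz_on UNIV f)}"

text \<open>The dual Lip_0(M)^*: functionals on Lip_0(M) which are linear and bounded.
  They are represented as functions on all of 'a => real which vanish outside Lip_0(M).\<close>
definition LipDual :: "'a::metric_space \<Rightarrow> (('a \<Rightarrow> real) \<Rightarrow> real) set" where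
  "LipDual z = {\<mu>. (\<forall>\<phi>. \<phi> \<notin> Lip0 z \<longrightarrow> \<mu> \<phi> = 0)
      \<and> (\<forall>\<phi>\<in>Lip0 z. \<forall>\<psi>\<in>Lip0 z. \<forall>a b. \<mu> (\<lambda>x. a * \<phi> x + b * \<psi> x) = a * \<mu> \<phi> + b * \<mu> \<psi>)
      \<and> (\<exists>K. \<forall>\<phi>\<in>Lip0 z. \<bar>\<mu> \<phi>\<bar> \<le> K * Lip \<phi>)}"

definition dnorm :: "'a::metric_space \<Rightarrow> (('a \<Rightarrow> real) \<Rightarrow> real) \<Rightarrow> real" where
  "dnorm z \<mu> = Sup {\<bar>\<mu> \<phi>\<bar> | \<phi>. \<phi> \<in> Lip0 z \<and> Lip \<phi> \<le> 1}"

definition delta :: "'a::metric_space \<Rightarrow> 'a \<Rightarrow> (('a \<Rightarrow> real) \<Rightarrow> real)" where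
  "delta z x = (\<lambda>\<phi>. if \<phi> \<in> Lip0 z then \<phi> x else 0)"

definition delta_span :: "'a::metric_space \<Rightarrow> (('a \<Rightarrow> real) \<Rightarrow> real) set" where
  "delta_span z = {(\<lambda>\<phi>. \<Sum>x\<in>A. c x * delta z x \<phi>) | A c. finite A}"

definition FreeSp :: "'a::metric_space \<Rightarrow> (('a \<Rightarrow> real) \<Rightarrow> real) set" where
  "FreeSp z = {\<mu> \<in> LipDual z. \<forall>e>0. \<exists>\<nu>\<in>delta_span z. dnorm z (\<mu> - \<nu>) < e}"

definition bounded_op_F :: "'a::metric_space \<Rightarrow>
    ((('a \<Rightarrow> real) \<Rightarrow> real) \<Rightarrow> (('a \<Rightarrow> real) \<Rightarrow> real)) \<Rightarrow> bool" where
  "bounded_op_F z T \<longleftrightarrow> (\<forall>\<mu>\<in>FreeSp z. T \<mu> \<in> FreeSp z)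
     \<and> (\<forall>\<mu>\<in>FreeSp z. \<forall>\<nu>\<in>FreeSp z. \<forall>a b.
          T (\<lambda>\<phi>. a * \<mu> \<phi> + b * \<nu> \<phi>) = (\<lambda>\<phi>. a * T \<mu> \<phi> + b * T \<nu> \<phi>))
     \<and> (\<exists>K. \<forall>\<mu>\<in>FreeSp z. dnorm z (T \<mu>) \<le> K * dnorm z \<mu>)
     \<and> (\<forall>\<mu>. \<mu> \<notin> FreeSp z \<longrightarrow> T \<mu> = (\<lambda>_. 0))"

definition fhat :: "'a::metric_space \<Rightarrow> ('a \<Rightarrow> 'a) \<Rightarrow>
    (('a \<Rightarrow> real) \<Rightarrow> real) \<Rightarrow> (('a \<Rightarrow> real) \<Rightarrow> real)" where
  "fhat z f = (THE T. bounded_op_F z T \<and> (\<forall>x. T (delta z x) = delta z (f x)))"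

definition RT :: "'a::metric_space \<Rightarrow>
    ((('a \<Rightarrow> real) \<Rightarrow> real) \<Rightarrow> (('a \<Rightarrow> real) \<Rightarrow> real)) \<Rightarrow> (('a \<Rightarrow> real) \<Rightarrow> real) set" where
  "RT z T = {\<mu> \<in> FreeSp z. liminf (\<lambda>n. ereal (dnorm z ((T ^^ n) \<mu> - \<mu>))) = 0}"

definition F_interior :: "'a::metric_space \<Rightarrow> (('a \<Rightarrow> real) \<Rightarrow> real) set \<Rightarrow> (('a \<Rightarrow> real) \<Rightarrow> real) set" where
  "F_interior z S = {\<mu> \<in> FreeSp z. \<exists>e>0. \<forall>\<nu>\<in>FreeSp z. dnorm z (\<nu> - \<mu>) < e \<longrightarrow> \<nu> \<in> S}"

definition rigid_F :: "'a::metric_space \<Rightarrow>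
    ((('a \<Rightarrow> real) \<Rightarrow> real) \<Rightarrow> (('a \<Rightarrow> real) \<Rightarrow> real)) \<Rightarrow> bool" where
  "rigid_F z T \<longleftrightarrow> (\<exists>r::nat \<Rightarrow> nat. strict_mono r \<and>
     (\<forall>\<mu>\<in>FreeSp z. (\<lambda>j. dnorm z ((T ^^ r j) \<mu> - \<mu>)) \<longlonglongrightarrow> 0))"

end

theory Submission
  imports Defs
begin


lemma Lip_le:
  assumes "C-lipschitz_on UNIV g" shows "Lip g \<le> C"
  unfolding Lip_def
  by (rule cInf_lower) (use assms lipschitz_on_nonneg in \<open>auto intro!: bdd_belowI[where m=0]\<close>)

lemma Lip_lip:
  assumes "C-lipschitz_on UNIV g" shows "(Lip g)-lipschitz_on UNIV g"
proof (rule lipschitz_onI)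
  have ne: "{C. C-lipschitz_on UNIV g} \<noteq> {}" using assms by auto
  show "0 \<le> Lip g" unfolding Lip_def
    by (rule cInf_greatest[OF ne]) (auto dest: lipschitz_on_nonneg)
  fix x y :: 'a
  show "dist (g x) (g y) \<le> Lip g * dist x y"
  proof (cases "x = y")
    case True then show ?thesis by simp
  next
    case False
    then have d: "dist x y > 0" by simp
    have "dist (g x) (g y) / dist x y \<le> Lip g" unfolding Lip_def
    proof (rule cInf_greatest[OF ne])
      fix C assume "C \<in> {C. C-lipschitz_on UNIV g}"
      then have "dist (g x) (g y) \<le> C * dist x y" by (auto dest: lipschitz_onD)
      then show "dist (g x) (g y) / dist x y \<le> C" using d by (simp add: divide_le_eq)
    qed
    then show ?thesis using d by (simp add: divide_le_eq mult.commute)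
  qed
qed

lemma Lip0_lip: "\<phi> \<in> Lip0 z \<Longrightarrow> (Lip \<phi>)-lipschitz_on UNIV \<phi>"
  unfolding Lip0_def using Lip_lip by blast

lemma Lip0_nonneg: "\<phi> \<in> Lip0 z \<Longrightarrow> 0 \<le> Lip \<phi>"
  using Lip0_lip lipschitz_on_nonneg by blast

lemma Lip0_diff: "\<phi> \<in> Lip0 z \<Longrightarrow> \<bar>\<phi> x - \<phi> y\<bar> \<le> Lip \<phi> * dist x y"
  using lipschitz_onD[OF Lip0_lip] by (fastforce simp: dist_real_def)

lemma Lip0_abs: "\<phi> \<in> Lip0 z \<Longrightarrow> \<bar>\<phi> x\<bar> \<le> Lip \<phi> * dist x z"
  using Lip0_diff[of \<phi> z x z] by (simp add: Lip0_def)

lemma Lip0_zero: fixes z :: "'a::metric_space" shows "(\<lambda>_. 0) \<in> Lip0 z"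
proof -
  have "0-lipschitz_on UNIV (\<lambda>_::'a. 0::real)" by (auto intro: lipschitz_onI)
  then show "(\<lambda>_. 0) \<in> Lip0 z" unfolding Lip0_def by blast
qed

lemma Lip_zero: "Lip (\<lambda>_::'a::metric_space. 0::real) \<le> 1"
proof -
  have "0-lipschitz_on UNIV (\<lambda>_::'a. 0::real)" by (auto intro: lipschitz_onI)
  then have "Lip (\<lambda>_::'a::metric_space. 0::real) \<le> 0" by (rule Lip_le)
  then show ?thesis by simp
qed

lemma Lip0_comb:
  assumes "\<phi> \<in> Lip0 z" "\<psi> \<in> Lip0 z"
  shows "(\<lambda>x. a * \<phi> x + b * \<psi> x) \<in> Lip0 z"
proof -
  have "(\<bar>a\<bar> * Lip \<phi> + \<bar>b\<bar> * Lip \<psi>)-lipschitz_on UNIV (\<lambda>x. a * \<phi> x + b * \<psi> x)"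
  proof (rule lipschitz_onI)
    fix x y
    have "\<bar>(a * \<phi> x + b * \<psi> x) - (a * \<phi> y + b * \<psi> y)\<bar> = \<bar>a * (\<phi> x - \<phi> y) + b * (\<psi> x - \<psi> y)\<bar>"
      by (simp add: algebra_simps)
    also have "\<dots> \<le> \<bar>a\<bar> * \<bar>\<phi> x - \<phi> y\<bar> + \<bar>b\<bar> * \<bar>\<psi> x - \<psi> y\<bar>"
      by (metis abs_mult abs_triangle_ineq)
    also have "\<dots> \<le> \<bar>a\<bar> * (Lip \<phi> * dist x y) + \<bar>b\<bar> * (Lip \<psi> * dist x y)"
      using assms by (intro add_mono mult_left_mono Lip0_diff) auto
    finally show "dist (a * \<phi> x + b * \<psi> x) (a * \<phi> y + b * \<psi> y) \<le> (\<bar>a\<bar> * Lip \<phi> + \<bar>b\<bar> * Lip \<psi>) * dist x y"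
      by (simp add: dist_real_def algebra_simps)
    show "0 \<le> \<bar>a\<bar> * Lip \<phi> + \<bar>b\<bar> * Lip \<psi>" using Lip0_nonneg[OF assms(1)] Lip0_nonneg[OF assms(2)] by simp
  qed
  then show ?thesis using assms unfolding Lip0_def by auto
qed

lemma Lip0_comp:
  assumes "\<phi> \<in> Lip0 z" "K-lipschitz_on UNIV g" "g z = z"
  shows "\<phi> \<circ> g \<in> Lip0 z" "Lip (\<phi> \<circ> g) \<le> Lip \<phi> * K"
proof -
  have h: "(Lip \<phi> * K)-lipschitz_on UNIV (\<phi> \<circ> g)"
    by (rule lipschitz_on_compose[OF assms(2)]) (rule lipschitz_on_subset[OF Lip0_lip[OF assms(1)]], auto)
  then show "Lip (\<phi> \<circ> g) \<le> Lip \<phi> * K" by (rule Lip_le)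
  show "\<phi> \<circ> g \<in> Lip0 z" using h assms unfolding Lip0_def by auto
qed

lemma LipDual_out: "\<mu> \<in> LipDual z \<Longrightarrow> \<phi> \<notin> Lip0 z \<Longrightarrow> \<mu> \<phi> = 0"
  unfolding LipDual_def by auto

lemma LipDual_lin: "\<mu> \<in> LipDual z \<Longrightarrow> \<phi> \<in> Lip0 z \<Longrightarrow> \<psi> \<in> Lip0 z \<Longrightarrow>
   \<mu> (\<lambda>x. a * \<phi> x + b * \<psi> x) = a * \<mu> \<phi> + b * \<mu> \<psi>"
  unfolding LipDual_def by blast

lemma LipDual_zero_fun: assumes "\<mu> \<in> LipDual z" shows "\<mu> (\<lambda>_. 0) = 0"
proof -
  have "\<mu> (\<lambda>x. 0 * (0::real) + 0 * 0) = 0 * \<mu> (\<lambda>_. 0) + 0 * \<mu> (\<lambda>_. 0)"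
    by (rule LipDual_lin[OF assms Lip0_zero Lip0_zero])
  then show ?thesis by simp
qed

lemma dnorm_facts:
  assumes "\<mu> \<in> LipDual z"
  shows "bdd_above {\<bar>\<mu> \<phi>\<bar> | \<phi>. \<phi> \<in> Lip0 z \<and> Lip \<phi> \<le> 1}"
    and "{\<bar>\<mu> \<phi>\<bar> | \<phi>. \<phi> \<in> Lip0 z \<and> Lip \<phi> \<le> 1} \<noteq> {}"
proof -
  obtain K where K: "\<forall>\<phi>\<in>Lip0 z. \<bar>\<mu> \<phi>\<bar> \<le> K * Lip \<phi>" using assms unfolding LipDual_def by blast
  show "bdd_above {\<bar>\<mu> \<phi>\<bar> | \<phi>. \<phi> \<in> Lip0 z \<and> Lip \<phi> \<le> 1}"
  proof (rule bdd_aboveI[where M="max K 0"], clarify)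
    fix \<phi> assume p: "\<phi> \<in> Lip0 z" "Lip \<phi> \<le> 1"
    have "\<bar>\<mu> \<phi>\<bar> \<le> K * Lip \<phi>" using K p by auto
    also have "\<dots> \<le> max K 0 * Lip \<phi>" using Lip0_nonneg[OF p(1)] by (intro mult_right_mono) auto
    also have "\<dots> \<le> max K 0" using p Lip0_nonneg[OF p(1)] by (simp add: mult_left_le)
    finally show "\<bar>\<mu> \<phi>\<bar> \<le> max K 0" .
  qed
  show "{\<bar>\<mu> \<phi>\<bar> | \<phi>. \<phi> \<in> Lip0 z \<and> Lip \<phi> \<le> 1} \<noteq> {}"
    using Lip0_zero Lip_zero by blast
qed

lemma dnorm_upper: "\<mu> \<in> LipDual z \<Longrightarrow> \<phi> \<in> Lip0 z \<Longrightarrow> Lip \<phi> \<le> 1 \<Longrightarrow> \<bar>\<mu> \<phi>\<bar> \<le> dnorm z \<mu>"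
  unfolding dnorm_def by (rule cSup_upper) (auto intro: dnorm_facts)

lemma dnorm_nonneg: "\<mu> \<in> LipDual z \<Longrightarrow> 0 \<le> dnorm z \<mu>"
  using dnorm_upper[OF _ Lip0_zero Lip_zero] by (meson abs_ge_zero order_trans)

lemma dnorm_le:
  assumes "\<mu> \<in> LipDual z" "\<And>\<phi>. \<phi> \<in> Lip0 z \<Longrightarrow> \<bar>\<mu> \<phi>\<bar> \<le> B * Lip \<phi>" "0 \<le> B"
  shows "dnorm z \<mu> \<le> B"
  unfolding dnorm_def
proof (rule cSup_least[OF dnorm_facts(2)[OF assms(1)]], clarify)
  fix \<phi> assume p: "\<phi> \<in> Lip0 z" "Lip \<phi> \<le> 1"
  have "\<bar>\<mu> \<phi>\<bar> \<le> B * Lip \<phi>" using assms p by auto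
  also have "\<dots> \<le> B" using p assms(3) by (simp add: mult_left_le)
  finally show "\<bar>\<mu> \<phi>\<bar> \<le> B" .
qed

lemma dnorm_bound:
  assumes "\<mu> \<in> LipDual z" "\<phi> \<in> Lip0 z"
  shows "\<bar>\<mu> \<phi>\<bar> \<le> dnorm z \<mu> * Lip \<phi>"
proof (cases "Lip \<phi> = 0")
  case True
  then have "0-lipschitz_on UNIV \<phi>" using Lip0_lip[OF assms(2)] by simp
  moreover have "\<phi> z = 0" using assms(2) unfolding Lip0_def by auto
  ultimately have "\<phi> x = 0" for x using lipschitz_onD[of 0 UNIV \<phi> x z] by simp
  then have "\<phi> = (\<lambda>_. 0)" by auto
  then have "\<mu> \<phi> = 0" using LipDual_zero_fun[OF assms(1)] by simp
  then show ?thesis using True by simp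
next
  case False
  define L where "L = Lip \<phi>"
  have L: "L > 0" using False Lip0_nonneg[OF assms(2)] L_def by auto
  define \<psi> where "\<psi> = (\<lambda>x. (1/L) * \<phi> x + 0 * \<phi> x)"
  have \<psi>: "\<psi> \<in> Lip0 z" unfolding \<psi>_def by (rule Lip0_comb[OF assms(2) assms(2)])
  have "1-lipschitz_on UNIV \<psi>"
  proof (rule lipschitz_onI)
    fix x y
    have "dist (\<psi> x) (\<psi> y) = (1/L) * \<bar>\<phi> x - \<phi> y\<bar>"
      using L by (simp add: \<psi>_def dist_real_def abs_divide flip: diff_divide_distrib)
    also have "\<dots> \<le> (1/L) * (L * dist x y)" using L Lip0_diff[OF assms(2)] L_def
      by (intro mult_left_mono) auto
    finally show "dist (\<psi> x) (\<psi> y) \<le> 1 * dist x y" using L by simp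
  qed simp
  then have "Lip \<psi> \<le> 1" by (rule Lip_le)
  then have "\<bar>\<mu> \<psi>\<bar> \<le> dnorm z \<mu>" using dnorm_upper[OF assms(1) \<psi>] by simp
  moreover have "\<mu> \<psi> = (1/L) * \<mu> \<phi> + 0 * \<mu> \<phi>" unfolding \<psi>_def by (rule LipDual_lin[OF assms(1) assms(2) assms(2)])
  ultimately have "(1/L) * \<bar>\<mu> \<phi>\<bar> \<le> dnorm z \<mu>" using L by (simp add: abs_mult)
  then show ?thesis using L L_def by (simp add: field_simps)
qed

lemma LipDual_comb:
  assumes "\<mu> \<in> LipDual z" "\<nu> \<in> LipDual z"
  shows "(\<lambda>\<phi>. a * \<mu> \<phi> + b * \<nu> \<phi>) \<in> LipDual z"
  unfolding LipDual_def
proof (intro CollectI conjI allI ballI impI)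
  fix \<phi> assume "\<phi> \<notin> Lip0 z" then show "a * \<mu> \<phi> + b * \<nu> \<phi> = 0"
    using LipDual_out[OF assms(1)] LipDual_out[OF assms(2)] by simp
next
  fix \<phi> \<psi> p q assume "\<phi> \<in> Lip0 z" "\<psi> \<in> Lip0 z"
  then show "a * \<mu> (\<lambda>x. p * \<phi> x + q * \<psi> x) + b * \<nu> (\<lambda>x. p * \<phi> x + q * \<psi> x) =
           p * (a * \<mu> \<phi> + b * \<nu> \<phi>) + q * (a * \<mu> \<psi> + b * \<nu> \<psi>)"
    using LipDual_lin[OF assms(1)] LipDual_lin[OF assms(2)] by (simp add: algebra_simps)
next
  show "\<exists>K. \<forall>\<phi>\<in>Lip0 z. \<bar>a * \<mu> \<phi> + b * \<nu> \<phi>\<bar> \<le> K * Lip \<phi>"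
  proof (intro exI ballI)
    fix \<phi> assume p: "\<phi> \<in> Lip0 z"
    have "\<bar>a * \<mu> \<phi> + b * \<nu> \<phi>\<bar> \<le> \<bar>a\<bar> * \<bar>\<mu> \<phi>\<bar> + \<bar>b\<bar> * \<bar>\<nu> \<phi>\<bar>"
      by (metis abs_mult abs_triangle_ineq)
    also have "\<dots> \<le> \<bar>a\<bar> * (dnorm z \<mu> * Lip \<phi>) + \<bar>b\<bar> * (dnorm z \<nu> * Lip \<phi>)"
      using assms p by (intro add_mono mult_left_mono dnorm_bound) auto
    finally show "\<bar>a * \<mu> \<phi> + b * \<nu> \<phi>\<bar> \<le> (\<bar>a\<bar> * dnorm z \<mu> + \<bar>b\<bar> * dnorm z \<nu>) * Lip \<phi>"
      by (simp add: algebra_simps)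
  qed
qed

lemma LipDual_diff: "\<mu> \<in> LipDual z \<Longrightarrow> \<nu> \<in> LipDual z \<Longrightarrow> \<mu> - \<nu> \<in> LipDual z"
  using LipDual_comb[of \<mu> z \<nu> 1 "-1"] by (simp add: fun_diff_def)

lemma LipDual_zero: "(\<lambda>_. 0) \<in> LipDual z"
  unfolding LipDual_def by (auto intro!: exI[of _ 0])

lemma dnorm_zero_imp: 
  assumes "\<mu> \<in> LipDual z" "dnorm z \<mu> \<le> 0" shows "\<mu> = (\<lambda>_. 0)"
proof
  fix \<phi> show "\<mu> \<phi> = 0"
  proof (cases "\<phi> \<in> Lip0 z")
    case True
    have "\<bar>\<mu> \<phi>\<bar> \<le> dnorm z \<mu> * Lip \<phi>" by (rule dnorm_bound[OF assms(1) True])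
    also have "\<dots> \<le> 0" using assms(2) Lip0_nonneg[OF True] by (simp add: mult_nonpos_nonneg)
    finally show ?thesis by simp
  qed (use assms LipDual_out in auto)
qed




lemma dnorm_comb_le:
  assumes "X \<in> LipDual z" "Y \<in> LipDual z"
  shows "dnorm z (\<lambda>\<phi>. a * X \<phi> + b * Y \<phi>) \<le> \<bar>a\<bar> * dnorm z X + \<bar>b\<bar> * dnorm z Y"
proof -
  have nn: "0 \<le> \<bar>a\<bar> * dnorm z X + \<bar>b\<bar> * dnorm z Y" using dnorm_nonneg[OF assms(1)] dnorm_nonneg[OF assms(2)] by simp
  show ?thesis
  proof (rule dnorm_le[OF LipDual_comb[OF assms] _ nn])
  fix \<phi> assume p: "\<phi> \<in> Lip0 z"
  have "\<bar>a * X \<phi> + b * Y \<phi>\<bar> \<le> \<bar>a\<bar> * \<bar>X \<phi>\<bar> + \<bar>b\<bar> * \<bar>Y \<phi>\<bar>"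
    by (metis abs_mult abs_triangle_ineq)
  also have "\<dots> \<le> \<bar>a\<bar> * (dnorm z X * Lip \<phi>) + \<bar>b\<bar> * (dnorm z Y * Lip \<phi>)"
    using assms p by (intro add_mono mult_left_mono dnorm_bound) auto
  finally show "\<bar>a * X \<phi> + b * Y \<phi>\<bar> \<le> (\<bar>a\<bar> * dnorm z X + \<bar>b\<bar> * dnorm z Y) * Lip \<phi>"
    by (simp add: algebra_simps)
  qed
qed

lemma frac_lt: assumes "0 \<le> s" "0 < e" shows "s * (e / (s + 1)) < (e::real)"
proof -
  have p: "s + 1 > 0" using assms by simp
  have "s * (e/(s+1)) = (s*e)/(s+1)" by simp
  also have "\<dots> < e" using p assms by (simp add: divide_less_eq algebra_simps)
  finally show ?thesis .
qed

lemma dnorm_diff_le: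
  assumes "X \<in> LipDual z" "Y \<in> LipDual z"
  shows "dnorm z (X - Y) \<le> dnorm z X + dnorm z Y"
  using dnorm_comb_le[OF assms, of 1 "-1"] by (simp add: fun_diff_def)

definition spn :: "'a::metric_space \<Rightarrow> 'b set \<Rightarrow> ('b \<Rightarrow> real) \<Rightarrow> ('b \<Rightarrow> 'a) \<Rightarrow> (('a\<Rightarrow>real)\<Rightarrow>real)" where
  "spn z A c h = (\<lambda>\<phi>. \<Sum>i\<in>A. c i * delta z (h i) \<phi>)"

lemma spn_apply: "\<phi> \<in> Lip0 z \<Longrightarrow> spn z A c h \<phi> = (\<Sum>i\<in>A. c i * \<phi> (h i))"
  by (simp add: spn_def delta_def)

lemma spn_out: "\<phi> \<notin> Lip0 z \<Longrightarrow> spn z A c h \<phi> = 0"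
  by (simp add: spn_def delta_def)

lemma spn_in_span:
  assumes "finite A" shows "spn z A c h \<in> delta_span z"
proof -
  have "spn z A c h = (\<lambda>\<phi>. \<Sum>y\<in>h ` A. (\<Sum>i\<in>{i. i \<in> A \<and> h i = y}. c i) * delta z y \<phi>)"
  proof
    fix \<phi>
    have "spn z A c h \<phi> = (\<Sum>y\<in>h ` A. \<Sum>i\<in>{i. i \<in> A \<and> h i = y}. c i * delta z (h i) \<phi>)"
      unfolding spn_def by (rule sum.image_gen[OF assms])
    also have "\<dots> = (\<Sum>y\<in>h ` A. (\<Sum>i\<in>{i. i \<in> A \<and> h i = y}. c i * delta z y \<phi>))"
      by (intro sum.cong refl) auto
    also have "\<dots> = (\<Sum>y\<in>h ` A. (\<Sum>i\<in>{i. i \<in> A \<and> h i = y}. c i) * delta z y \<phi>)"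
      by (simp add: sum_distrib_right)
    finally show "spn z A c h \<phi> = (\<Sum>y\<in>h ` A. (\<Sum>i\<in>{i. i \<in> A \<and> h i = y}. c i) * delta z y \<phi>)" .
  qed
  then show ?thesis unfolding delta_span_def
    apply (intro CollectI exI[of _ "h ` A"] exI[of _ "\<lambda>y. \<Sum>i\<in>{i. i \<in> A \<and> h i = y}. c i"])
    using assms by simp
qed

lemma span_is_spn: "\<nu> \<in> delta_span z \<Longrightarrow> \<exists>A c. finite A \<and> \<nu> = spn z A c id"
  unfolding delta_span_def spn_def by auto

lemma spn_bound:
  assumes "\<phi> \<in> Lip0 z"
  shows "\<bar>spn z A c h \<phi>\<bar> \<le> (\<Sum>i\<in>A. \<bar>c i\<bar> * dist (h i) z) * Lip \<phi>"
proof -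
  have "\<bar>spn z A c h \<phi>\<bar> \<le> (\<Sum>i\<in>A. \<bar>c i * \<phi> (h i)\<bar>)"
    unfolding spn_apply[OF assms] by (rule sum_abs)
  also have "\<dots> \<le> (\<Sum>i\<in>A. \<bar>c i\<bar> * dist (h i) z * Lip \<phi>)"
  proof (intro sum_mono)
    fix i
    have "\<bar>\<phi> (h i)\<bar> \<le> Lip \<phi> * dist (h i) z" by (rule Lip0_abs[OF assms])
    then have "\<bar>c i\<bar> * \<bar>\<phi> (h i)\<bar> \<le> \<bar>c i\<bar> * (Lip \<phi> * dist (h i) z)" by (rule mult_left_mono) simp
    then show "\<bar>c i * \<phi> (h i)\<bar> \<le> \<bar>c i\<bar> * dist (h i) z * Lip \<phi>" by (simp add: abs_mult algebra_simps)
  qed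
  finally show ?thesis by (simp add: sum_distrib_right)
qed

lemma spn_LipDual:
  assumes "finite A" shows "spn z A c h \<in> LipDual z"
  unfolding LipDual_def
proof (intro CollectI conjI allI ballI impI)
  fix \<phi> assume "\<phi> \<notin> Lip0 z" then show "spn z A c h \<phi> = 0" by (rule spn_out)
next
  fix \<phi> \<psi> a b assume p: "\<phi> \<in> Lip0 z" "\<psi> \<in> Lip0 z"
  show "spn z A c h (\<lambda>x. a * \<phi> x + b * \<psi> x) = a * spn z A c h \<phi> + b * spn z A c h \<psi>"
    using p Lip0_comb[OF p] by (simp add: spn_apply sum_distrib_left sum.distrib algebra_simps)
next
  show "\<exists>K. \<forall>\<phi>\<in>Lip0 z. \<bar>spn z A c h \<phi>\<bar> \<le> K * Lip \<phi>"
    using spn_bound by blast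
qed

lemma spn_dnorm: "finite A \<Longrightarrow> dnorm z (spn z A c h) \<le> (\<Sum>i\<in>A. \<bar>c i\<bar> * dist (h i) z)"
  by (rule dnorm_le[OF spn_LipDual spn_bound]) (auto intro: sum_nonneg)

lemma delta_spn: "delta z x = spn z {x} (\<lambda>_. 1) id"
  by (simp add: spn_def)

lemma dnorm_zero: "dnorm z (\<lambda>_. 0) \<le> 0"
  by (rule dnorm_le[OF LipDual_zero]) auto

lemma span_FreeSp: assumes "\<nu> \<in> delta_span z" shows "\<nu> \<in> FreeSp z"
proof -
  obtain A c where "finite A" "\<nu> = spn z A c id" using span_is_spn[OF assms] by blast
  then have "\<nu> \<in> LipDual z" using spn_LipDual by blast
  moreover have "dnorm z (\<nu> - \<nu>) < e" if "e > 0" for e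
    using dnorm_zero[of z] that by (simp add: fun_diff_def)
  ultimately show ?thesis unfolding FreeSp_def using assms by blast
qed

lemma spn_FreeSp: "finite A \<Longrightarrow> spn z A c h \<in> FreeSp z"
  using span_FreeSp spn_in_span by blast

lemma delta_FreeSp: "delta z x \<in> FreeSp z"
  by (simp add: delta_spn spn_FreeSp)

lemma FreeSp_LipDual: "\<mu> \<in> FreeSp z \<Longrightarrow> \<mu> \<in> LipDual z"
  unfolding FreeSp_def by auto

lemma FreeSp_approx: 
  assumes "\<mu> \<in> FreeSp z" "e > 0" shows "\<exists>A c. finite A \<and> dnorm z (\<mu> - spn z A c id) < e"
proof -
  obtain \<nu> where n: "\<nu> \<in> delta_span z" "dnorm z (\<mu> - \<nu>) < e" using assms unfolding FreeSp_def by blast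
  obtain A c where "finite A" "\<nu> = spn z A c id" using span_is_spn[OF n(1)] by blast
  then show ?thesis using n(2) by blast
qed

lemma spn_comb:
  assumes "finite A" "finite B"
  shows "(\<lambda>\<phi>. a * spn z A c h \<phi> + b * spn z B d k \<phi>) =
     spn z (A <+> B) (case_sum (\<lambda>i. a * c i) (\<lambda>i. b * d i)) (case_sum h k)"
  by (rule ext) (simp add: spn_def sum.Plus[OF assms] comp_def sum_distrib_left mult.assoc)

lemma FreeSp_comb:
  assumes "\<mu> \<in> FreeSp z" "\<nu> \<in> FreeSp z"
  shows "(\<lambda>\<phi>. a * \<mu> \<phi> + b * \<nu> \<phi>) \<in> FreeSp z"
proof -
  have L: "\<mu> \<in> LipDual z" "\<nu> \<in> LipDual z" using assms FreeSp_LipDual by auto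
  have "\<exists>w\<in>delta_span z. dnorm z ((\<lambda>\<phi>. a * \<mu> \<phi> + b * \<nu> \<phi>) - w) < e" if e: "e > 0" for e
  proof -
    define e' where "e' = e / (\<bar>a\<bar> + \<bar>b\<bar> + 1)"
    have e': "e' > 0" using e by (simp add: e'_def add_pos_nonneg)
    obtain A c where A: "finite A" "dnorm z (\<mu> - spn z A c id) < e'" using FreeSp_approx[OF assms(1) e'] by blast
    obtain B d where B: "finite B" "dnorm z (\<nu> - spn z B d id) < e'" using FreeSp_approx[OF assms(2) e'] by blast
    define w where "w = (\<lambda>\<phi>. a * spn z A c id \<phi> + b * spn z B d id \<phi>)"
    have w: "w \<in> delta_span z" unfolding w_def spn_comb[OF A(1) B(1)] by (rule spn_in_span) (use A B in auto)
    have LA: "\<mu> - spn z A c id \<in> LipDual z" "\<nu> - spn z B d id \<in> LipDual z"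
      using L A B by (auto intro!: LipDual_diff spn_LipDual)
    have "(\<lambda>\<phi>. a * \<mu> \<phi> + b * \<nu> \<phi>) - w = (\<lambda>\<phi>. a * (\<mu> - spn z A c id) \<phi> + b * (\<nu> - spn z B d id) \<phi>)"
      by (rule ext) (simp add: w_def algebra_simps)
    then have "dnorm z ((\<lambda>\<phi>. a * \<mu> \<phi> + b * \<nu> \<phi>) - w) \<le> \<bar>a\<bar> * dnorm z (\<mu> - spn z A c id) + \<bar>b\<bar> * dnorm z (\<nu> - spn z B d id)"
      using dnorm_comb_le[OF LA] by simp
    also have "\<dots> \<le> \<bar>a\<bar> * e' + \<bar>b\<bar> * e'"
      using A B by (intro add_mono mult_left_mono) auto
    also have "\<dots> = (\<bar>a\<bar> + \<bar>b\<bar>) * (e / (\<bar>a\<bar> + \<bar>b\<bar> + 1))" unfolding e'_def by (simp only: distrib_right)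
    also have "\<dots> < e" by (rule frac_lt) (use e in auto)
    finally show ?thesis using w by blast
  qed
  then show ?thesis unfolding FreeSp_def using LipDual_comb[OF L] by blast
qed

lemma FreeSp_diff: "\<mu> \<in> FreeSp z \<Longrightarrow> \<nu> \<in> FreeSp z \<Longrightarrow> \<mu> - \<nu> \<in> FreeSp z"
  using FreeSp_comb[of \<mu> z \<nu> 1 "-1"] by (simp add: fun_diff_def)

definition pull :: "'a::metric_space \<Rightarrow> ('a \<Rightarrow> 'a) \<Rightarrow> (('a\<Rightarrow>real)\<Rightarrow>real) \<Rightarrow> (('a\<Rightarrow>real)\<Rightarrow>real)" where
  "pull z g \<mu> = (\<lambda>\<phi>. if \<phi> \<in> Lip0 z then \<mu> (\<phi> \<circ> g) else 0)"

lemma pull_bound: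
  assumes "\<mu> \<in> LipDual z" "K-lipschitz_on UNIV g" "g z = z" "\<phi> \<in> Lip0 z"
  shows "\<bar>pull z g \<mu> \<phi>\<bar> \<le> (K * dnorm z \<mu>) * Lip \<phi>"
proof -
  have "\<bar>pull z g \<mu> \<phi>\<bar> = \<bar>\<mu> (\<phi> \<circ> g)\<bar>" using assms by (simp add: pull_def)
  also have "\<dots> \<le> dnorm z \<mu> * Lip (\<phi> \<circ> g)" by (rule dnorm_bound[OF assms(1) Lip0_comp(1)[OF assms(4) assms(2,3)]])
  also have "\<dots> \<le> dnorm z \<mu> * (Lip \<phi> * K)"
    by (rule mult_left_mono[OF Lip0_comp(2)[OF assms(4) assms(2,3)] dnorm_nonneg[OF assms(1)]])
  finally show ?thesis by (simp add: algebra_simps)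
qed

lemma pull_LipDual:
  assumes "\<mu> \<in> LipDual z" "K-lipschitz_on UNIV g" "g z = z"
  shows "pull z g \<mu> \<in> LipDual z"
  unfolding LipDual_def
proof (intro CollectI conjI allI ballI impI)
  fix \<phi> assume "\<phi> \<notin> Lip0 z" then show "pull z g \<mu> \<phi> = 0" by (simp add: pull_def)
next
  fix \<phi> \<psi> a b assume p: "\<phi> \<in> Lip0 z" "\<psi> \<in> Lip0 z"
  have eq: "(\<lambda>x. a * \<phi> x + b * \<psi> x) \<circ> g = (\<lambda>x. a * (\<phi> \<circ> g) x + b * (\<psi> \<circ> g) x)" by (simp add: comp_def)
  show "pull z g \<mu> (\<lambda>x. a * \<phi> x + b * \<psi> x) = a * pull z g \<mu> \<phi> + b * pull z g \<mu> \<psi>"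
    using p Lip0_comb[OF p] LipDual_lin[OF assms(1) Lip0_comp(1)[OF p(1) assms(2,3)] Lip0_comp(1)[OF p(2) assms(2,3)]]
    unfolding pull_def eq by simp
next
  show "\<exists>K. \<forall>\<phi>\<in>Lip0 z. \<bar>pull z g \<mu> \<phi>\<bar> \<le> K * Lip \<phi>"
    using pull_bound[OF assms] by blast
qed

lemma pull_dnorm:
  assumes "\<mu> \<in> LipDual z" "K-lipschitz_on UNIV g" "g z = z"
  shows "dnorm z (pull z g \<mu>) \<le> K * dnorm z \<mu>"
proof (rule dnorm_le[OF pull_LipDual[OF assms]])
  fix \<phi> assume "\<phi> \<in> Lip0 z" then show "\<bar>pull z g \<mu> \<phi>\<bar> \<le> (K * dnorm z \<mu>) * Lip \<phi>" by (rule pull_bound[OF assms])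
next
  show "0 \<le> K * dnorm z \<mu>" by (rule mult_nonneg_nonneg[OF lipschitz_on_nonneg[OF assms(2)] dnorm_nonneg[OF assms(1)]])
qed

lemma pull_spn:
  assumes "K-lipschitz_on UNIV g" "g z = z"
  shows "pull z g (spn z A c h) = spn z A c (g \<circ> h)"
proof
  fix \<phi> show "pull z g (spn z A c h) \<phi> = spn z A c (g \<circ> h) \<phi>"
    using Lip0_comp(1)[OF _ assms] by (cases "\<phi> \<in> Lip0 z") (auto simp: pull_def spn_apply spn_out)
qed

lemma pull_diff: "pull z g \<mu> - pull z g \<nu> = pull z g (\<mu> - \<nu>)"
  by (rule ext) (simp add: pull_def)

lemma pull_FreeSp:
  assumes "\<mu> \<in> FreeSp z" "K-lipschitz_on UNIV g" "g z = z"
  shows "pull z g \<mu> \<in> FreeSp z"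
proof -
  have L: "\<mu> \<in> LipDual z" using assms FreeSp_LipDual by auto
  have K: "K \<ge> 0" using assms lipschitz_on_nonneg by auto
  have "\<exists>w\<in>delta_span z. dnorm z (pull z g \<mu> - w) < e" if e: "e > 0" for e
  proof -
    obtain A c where A: "finite A" "dnorm z (\<mu> - spn z A c id) < e / (K + 1)"
      using FreeSp_approx[OF assms(1)] e K by (metis add_nonneg_pos divide_pos_pos zero_less_one)
    have "dnorm z (pull z g \<mu> - pull z g (spn z A c id)) = dnorm z (pull z g (\<mu> - spn z A c id))"
      by (simp add: pull_diff)
    also have "\<dots> \<le> K * dnorm z (\<mu> - spn z A c id)"
      by (rule pull_dnorm[OF _ assms(2,3)]) (use L A spn_LipDual LipDual_diff in blast)
    also have "\<dots> \<le> K * (e / (K + 1))" using A K by (intro mult_left_mono) auto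
    also have "\<dots> < e" by (rule frac_lt) (use K e in auto)
    finally have d: "dnorm z (pull z g \<mu> - pull z g (spn z A c id)) < e" .
    moreover have "pull z g (spn z A c id) \<in> delta_span z"
      unfolding pull_spn[OF assms(2,3)] by (rule spn_in_span[OF A(1)])
    ultimately show ?thesis by blast
  qed
  then show ?thesis unfolding FreeSp_def using pull_LipDual[OF L assms(2,3)] by blast
qed

lemma pull_pull:
  assumes "K-lipschitz_on UNIV g" "g z = z"
  shows "pull z g (pull z h \<mu>) = pull z (g \<circ> h) \<mu>"
proof
  fix \<phi> show "pull z g (pull z h \<mu>) \<phi> = pull z (g \<circ> h) \<mu> \<phi>"
    using Lip0_comp(1)[OF _ assms] by (cases "\<phi> \<in> Lip0 z") (auto simp: pull_def comp_assoc)
qed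

lemma pull_id: "\<mu> \<in> LipDual z \<Longrightarrow> pull z id \<mu> = \<mu>"
  by (rule ext) (auto simp: pull_def LipDual_out)

definition Top :: "'a::metric_space \<Rightarrow> ('a \<Rightarrow> 'a) \<Rightarrow> (('a\<Rightarrow>real)\<Rightarrow>real) \<Rightarrow> (('a\<Rightarrow>real)\<Rightarrow>real)" where
  "Top z f \<mu> = (if \<mu> \<in> FreeSp z then pull z f \<mu> else (\<lambda>_. 0))"

lemma pull_delta:
  assumes "K-lipschitz_on UNIV g" "g z = z"
  shows "pull z g (delta z x) = delta z (g x)"
proof -
  have "pull z g (delta z x) = spn z {x} (\<lambda>_. 1) (g \<circ> id)"
    unfolding delta_spn[of z x] by (rule pull_spn[OF assms])
  also have "\<dots> = delta z (g x)" by (simp add: spn_def)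
  finally show ?thesis .
qed

lemma Top_bounded:
  assumes "K-lipschitz_on UNIV f" "f z = z"
  shows "bounded_op_F z (Top z f)"
  unfolding bounded_op_F_def
proof (intro conjI ballI allI impI)
  fix \<mu> assume "\<mu> \<in> FreeSp z" then show "Top z f \<mu> \<in> FreeSp z"
    using pull_FreeSp[OF _ assms] by (simp add: Top_def)
next
  fix \<mu> \<nu> a b assume m: "\<mu> \<in> FreeSp z" "\<nu> \<in> FreeSp z"
  have c: "(\<lambda>\<phi>. a * \<mu> \<phi> + b * \<nu> \<phi>) \<in> FreeSp z" by (rule FreeSp_comb[OF m])
  show "Top z f (\<lambda>\<phi>. a * \<mu> \<phi> + b * \<nu> \<phi>) = (\<lambda>\<phi>. a * Top z f \<mu> \<phi> + b * Top z f \<nu> \<phi>)"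
    unfolding Top_def using c m by (simp add: pull_def fun_eq_iff)
next
  show "\<exists>K. \<forall>\<mu>\<in>FreeSp z. dnorm z (Top z f \<mu>) \<le> K * dnorm z \<mu>"
    using pull_dnorm[OF FreeSp_LipDual assms] by (auto simp: Top_def)
next
  fix \<mu> assume "\<mu> \<notin> FreeSp z" then show "Top z f \<mu> = (\<lambda>_. 0)" by (simp add: Top_def)
qed

lemma Top_delta:
  assumes "K-lipschitz_on UNIV f" "f z = z"
  shows "Top z f (delta z x) = delta z (f x)"
  using delta_FreeSp[of z x] pull_delta[OF assms, of x] by (simp add: Top_def)

lemma bounded_unique:
  assumes T: "bounded_op_F z T" and Td: "\<And>x. T (delta z x) = delta z (f x)"
    and f: "Kf-lipschitz_on UNIV f" "f z = z"
  shows "T = Top z f"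
proof -
  have maps: "\<And>\<mu>. \<mu> \<in> FreeSp z \<Longrightarrow> T \<mu> \<in> FreeSp z" using T unfolding bounded_op_F_def by blast
  have lin: "\<And>\<mu> \<nu> a b. \<mu> \<in> FreeSp z \<Longrightarrow> \<nu> \<in> FreeSp z \<Longrightarrow>
       T (\<lambda>\<phi>. a * \<mu> \<phi> + b * \<nu> \<phi>) = (\<lambda>\<phi>. a * T \<mu> \<phi> + b * T \<nu> \<phi>)"
    using T unfolding bounded_op_F_def by blast
  obtain K where K: "\<And>\<mu>. \<mu> \<in> FreeSp z \<Longrightarrow> dnorm z (T \<mu>) \<le> K * dnorm z \<mu>"
    using T unfolding bounded_op_F_def by blast
  have out: "\<And>\<mu>. \<mu> \<notin> FreeSp z \<Longrightarrow> T \<mu> = (\<lambda>_. 0)" using T unfolding bounded_op_F_def by blast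
  have Kf: "Kf \<ge> 0" using f lipschitz_on_nonneg by auto
  have "T (\<lambda>\<phi>. 0 * delta z z \<phi> + 0 * delta z z \<phi>) = (\<lambda>\<phi>. 0 * T (delta z z) \<phi> + 0 * T (delta z z) \<phi>)"
    by (rule lin[OF delta_FreeSp delta_FreeSp])
  then have T0: "T (\<lambda>_. 0) = (\<lambda>_. 0)" by simp
  have Tspn: "T (spn z A c id) = spn z A c f" if "finite A" for A c
    using that
  proof (induction A rule: finite_induct)
    case empty then show ?case using T0 by (simp add: spn_def)
  next
    case (insert x A)
    have "spn z (insert x A) c id = (\<lambda>\<phi>. 1 * spn z A c id \<phi> + c x * delta z x \<phi>)"
      using insert by (simp add: spn_def fun_eq_iff add.commute)
    moreover have "T (\<lambda>\<phi>. 1 * spn z A c id \<phi> + c x * delta z x \<phi>) = (\<lambda>\<phi>. 1 * T (spn z A c id) \<phi> + c x * T (delta z x) \<phi>)"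
      by (rule lin[OF spn_FreeSp[OF insert(1)] delta_FreeSp])
    ultimately have "T (spn z (insert x A) c id) = (\<lambda>\<phi>. 1 * T (spn z A c id) \<phi> + c x * T (delta z x) \<phi>)"
      by simp
    then show ?case using insert Td by (simp add: spn_def fun_eq_iff algebra_simps)
  qed
  have Tdiff: "T (\<mu> - \<nu>) = T \<mu> - T \<nu>" if "\<mu> \<in> FreeSp z" "\<nu> \<in> FreeSp z" for \<mu> \<nu>
    using lin[OF that, of 1 "-1"] by (simp add: fun_diff_def)
  have eqF: "T \<mu> = Top z f \<mu>" if m: "\<mu> \<in> FreeSp z" for \<mu>
  proof -
    define D where "D = T \<mu> - pull z f \<mu>"
    have LD: "D \<in> LipDual z" unfolding D_def
      using maps[OF m] pull_FreeSp[OF m f] by (intro LipDual_diff FreeSp_LipDual)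
    have small: "dnorm z D < \<delta>" if \<delta>: "\<delta> > 0" for \<delta>
    proof -
      define e where "e = \<delta> / (\<bar>K\<bar> + Kf + 1)"
      have e: "e > 0" using \<delta> Kf by (simp add: e_def add_nonneg_pos)
      obtain A c where A: "finite A" "dnorm z (\<mu> - spn z A c id) < e" using FreeSp_approx[OF m e] by blast
      define \<nu> where "\<nu> = spn z A c id"
      have nF: "\<nu> \<in> FreeSp z" using A spn_FreeSp \<nu>_def by blast
      have dF: "\<mu> - \<nu> \<in> FreeSp z" using FreeSp_diff[OF m nF] .
      have "T \<nu> = pull z f \<nu>" unfolding \<nu>_def Tspn[OF A(1)] pull_spn[OF f] by simp
      then have "D = T (\<mu> - \<nu>) - pull z f (\<mu> - \<nu>)"
        by (simp add: D_def Tdiff[OF m nF] fun_eq_iff flip: pull_diff)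
      then have "dnorm z D \<le> dnorm z (T (\<mu> - \<nu>)) + dnorm z (pull z f (\<mu> - \<nu>))"
        using dnorm_diff_le[OF FreeSp_LipDual[OF maps[OF dF]] pull_LipDual[OF FreeSp_LipDual[OF dF] f]] by simp
      also have "\<dots> \<le> K * dnorm z (\<mu> - \<nu>) + Kf * dnorm z (\<mu> - \<nu>)"
        by (intro add_mono K[OF dF] pull_dnorm[OF FreeSp_LipDual[OF dF] f])
      also have "\<dots> \<le> (\<bar>K\<bar> + Kf) * e"
      proof -
        have n0: "0 \<le> dnorm z (\<mu> - \<nu>)" using dnorm_nonneg FreeSp_LipDual[OF dF] by blast
        have "K * dnorm z (\<mu> - \<nu>) + Kf * dnorm z (\<mu> - \<nu>) \<le> (\<bar>K\<bar> + Kf) * dnorm z (\<mu> - \<nu>)"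
          using n0 by (simp add: distrib_right mult_right_mono)
        also have "\<dots> \<le> (\<bar>K\<bar> + Kf) * e" using A Kf \<nu>_def by (intro mult_left_mono) auto
        finally show ?thesis .
      qed
      also have "\<dots> < \<delta>" unfolding e_def by (rule frac_lt) (use \<delta> Kf in auto)
      finally show ?thesis .
    qed
    have "dnorm z D \<le> 0"
    proof (rule ccontr)
      assume "\<not> dnorm z D \<le> 0" then have "dnorm z D > 0" by simp
      from small[OF this] show False by simp
    qed
    then have "D = (\<lambda>_. 0)" by (rule dnorm_zero_imp[OF LD])
    then show ?thesis using m by (simp add: D_def Top_def fun_eq_iff)
  qed
  show ?thesis
  proof
    fix \<mu> show "T \<mu> = Top z f \<mu>"
      by (cases "\<mu> \<in> FreeSp z") (auto simp: eqF out Top_def)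
  qed
qed

lemma fhat_eq:
  assumes "Kf-lipschitz_on UNIV f" "f z = z"
  shows "fhat z f = Top z f"
proof -
  have ex: "bounded_op_F z (Top z f) \<and> (\<forall>x. Top z f (delta z x) = delta z (f x))"
    using Top_bounded[OF assms] Top_delta[OF assms] by blast
  have un: "T = Top z f" if "bounded_op_F z T \<and> (\<forall>x. T (delta z x) = delta z (f x))" for T
    using bounded_unique[OF _ _ assms] that by blast
  show ?thesis unfolding fhat_def
  proof (rule the_equality)
    show "bounded_op_F z (Top z f) \<and> (\<forall>x. Top z f (delta z x) = delta z (f x))" by (rule ex)
  next
    fix T assume "bounded_op_F z T \<and> (\<forall>x. T (delta z x) = delta z (f x))"
    then show "T = Top z f" by (rule un)
  qed
qed

lemma funpow_lip:
  assumes "Kf-lipschitz_on UNIV f" "f z = z"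
  shows "(Kf ^ n)-lipschitz_on UNIV (f ^^ n) \<and> (f ^^ n) z = z"
proof (induction n)
  case 0 show ?case by (auto intro: lipschitz_onI)
next
  case (Suc n)
  have "(Kf * Kf ^ n)-lipschitz_on UNIV (f \<circ> f ^^ n)"
    by (rule lipschitz_on_compose[OF conjunct1[OF Suc] lipschitz_on_subset[OF assms(1)]]) auto
  then show ?case using Suc assms(2) by simp
qed

lemma Top_pow:
  assumes "Kf-lipschitz_on UNIV f" "f z = z" "\<mu> \<in> FreeSp z"
  shows "(Top z f ^^ n) \<mu> = pull z (f ^^ n) \<mu>"
proof (induction n)
  case 0
  have "pull z (f ^^ 0) \<mu> = \<mu>" unfolding funpow.simps(1) by (rule pull_id[OF FreeSp_LipDual[OF assms(3)]])
  then show ?case by (simp add: id_def)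
next
  case (Suc n)
  have "pull z (f ^^ n) \<mu> \<in> FreeSp z"
    using pull_FreeSp[OF assms(3)] funpow_lip[OF assms(1,2)] by blast
  then show ?case using Suc pull_pull[OF assms(1,2)] by (simp add: Top_def comp_def)
qed




lemma mult_div_cancel': "(y::real) \<noteq> 0 \<Longrightarrow> y * (x / y) = x" by simp

lemma approx_bound:
  assumes m: "\<mu> \<in> FreeSp z" and A: "finite A" and g: "C-lipschitz_on UNIV g" "g z = z"
  shows "dnorm z (pull z g \<mu> - \<mu>) \<le> (C + 1) * dnorm z (\<mu> - spn z A c id) + (\<Sum>a\<in>A. \<bar>c a\<bar> * dist (g a) a)"
proof -
  define \<nu> where "\<nu> = spn z A c id"
  have L: "\<mu> \<in> LipDual z" using FreeSp_LipDual[OF m] .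
  have Ln: "\<nu> \<in> LipDual z" using spn_LipDual[OF A] \<nu>_def by simp
  have Ld: "\<mu> - \<nu> \<in> LipDual z" using LipDual_diff[OF L Ln] .
  have C: "C \<ge> 0" using lipschitz_on_nonneg[OF g(1)] .
  have dn: "0 \<le> dnorm z (\<mu> - \<nu>)" using dnorm_nonneg[OF Ld] .
  have X: "pull z g \<mu> - \<mu> \<in> LipDual z" using LipDual_diff[OF pull_LipDual[OF L g] L] .
  show ?thesis unfolding \<nu>_def[symmetric]
  proof (rule dnorm_le[OF X])
    show "0 \<le> (C + 1) * dnorm z (\<mu> - \<nu>) + (\<Sum>a\<in>A. \<bar>c a\<bar> * dist (g a) a)"
      using C dn by (intro add_nonneg_nonneg mult_nonneg_nonneg sum_nonneg) auto
    fix \<phi> assume p: "\<phi> \<in> Lip0 z"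
    have pg: "\<phi> \<circ> g \<in> Lip0 z" using Lip0_comp(1)[OF p g] .
    have Lp: "0 \<le> Lip \<phi>" using Lip0_nonneg[OF p] .
    have eq: "(pull z g \<mu> - \<mu>) \<phi> = (\<mu> - \<nu>) (\<phi> \<circ> g) - (\<mu> - \<nu>) \<phi> + (\<nu> (\<phi> \<circ> g) - \<nu> \<phi>)"
      using p by (simp add: pull_def)
    have b1: "\<bar>(\<mu> - \<nu>) (\<phi> \<circ> g)\<bar> \<le> C * dnorm z (\<mu> - \<nu>) * Lip \<phi>"
    proof -
      have "\<bar>(\<mu> - \<nu>) (\<phi> \<circ> g)\<bar> \<le> dnorm z (\<mu> - \<nu>) * Lip (\<phi> \<circ> g)" by (rule dnorm_bound[OF Ld pg])
      also have "\<dots> \<le> dnorm z (\<mu> - \<nu>) * (Lip \<phi> * C)"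
        by (rule mult_left_mono[OF Lip0_comp(2)[OF p g] dn])
      finally show ?thesis by (simp add: algebra_simps)
    qed
    have b2: "\<bar>(\<mu> - \<nu>) \<phi>\<bar> \<le> dnorm z (\<mu> - \<nu>) * Lip \<phi>" by (rule dnorm_bound[OF Ld p])
    have b3: "\<bar>\<nu> (\<phi> \<circ> g) - \<nu> \<phi>\<bar> \<le> (\<Sum>a\<in>A. \<bar>c a\<bar> * dist (g a) a) * Lip \<phi>"
    proof -
      have "\<nu> (\<phi> \<circ> g) - \<nu> \<phi> = (\<Sum>a\<in>A. c a * (\<phi> (g a) - \<phi> a))"
        unfolding \<nu>_def spn_apply[OF pg] spn_apply[OF p] by (simp add: sum_subtractf algebra_simps)
      then have "\<bar>\<nu> (\<phi> \<circ> g) - \<nu> \<phi>\<bar> \<le> (\<Sum>a\<in>A. \<bar>c a * (\<phi> (g a) - \<phi> a)\<bar>)" by (simp add: sum_abs)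
      also have "\<dots> \<le> (\<Sum>a\<in>A. \<bar>c a\<bar> * dist (g a) a * Lip \<phi>)"
      proof (intro sum_mono)
        fix a
        have "\<bar>c a * (\<phi> (g a) - \<phi> a)\<bar> = \<bar>c a\<bar> * \<bar>\<phi> (g a) - \<phi> a\<bar>" by (rule abs_mult)
        also have "\<dots> \<le> \<bar>c a\<bar> * (Lip \<phi> * dist (g a) a)"
          by (rule mult_left_mono[OF Lip0_diff[OF p]]) simp
        also have "\<dots> = \<bar>c a\<bar> * dist (g a) a * Lip \<phi>" by (simp only: mult_ac)
        finally show "\<bar>c a * (\<phi> (g a) - \<phi> a)\<bar> \<le> \<bar>c a\<bar> * dist (g a) a * Lip \<phi>" .
      qed
      finally show ?thesis by (simp add: sum_distrib_right)
    qed
    have "\<bar>(pull z g \<mu> - \<mu>) \<phi>\<bar> \<le> \<bar>(\<mu> - \<nu>) (\<phi> \<circ> g)\<bar> + \<bar>(\<mu> - \<nu>) \<phi>\<bar> + \<bar>\<nu> (\<phi> \<circ> g) - \<nu> \<phi>\<bar>"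
      unfolding eq by linarith
    also have "\<dots> \<le> C * dnorm z (\<mu> - \<nu>) * Lip \<phi> + dnorm z (\<mu> - \<nu>) * Lip \<phi> + (\<Sum>a\<in>A. \<bar>c a\<bar> * dist (g a) a) * Lip \<phi>"
      using b1 b2 b3 by linarith
    finally show "\<bar>(pull z g \<mu> - \<mu>) \<phi>\<bar> \<le> ((C + 1) * dnorm z (\<mu> - \<nu>) + (\<Sum>a\<in>A. \<bar>c a\<bar> * dist (g a) a)) * Lip \<phi>"
      by (simp add: algebra_simps)
  qed
qed

lemma liminf_zeroI:
  fixes u :: "nat \<Rightarrow> real"
  assumes "\<And>n. 0 \<le> u n" "\<And>e N. e > 0 \<Longrightarrow> \<exists>n\<ge>N. u n < e"
  shows "liminf (\<lambda>n. ereal (u n)) = 0"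
proof (rule antisym)
  show "0 \<le> liminf (\<lambda>n. ereal (u n))"
    by (rule Liminf_bounded) (use assms(1) in auto)
  show "liminf (\<lambda>n. ereal (u n)) \<le> 0"
  proof (rule ereal_le_epsilon2)
    fix e :: real assume e: "0 < e"
    show "liminf (\<lambda>n. ereal (u n)) \<le> 0 + ereal e"
    proof (rule ccontr)
      assume "\<not> ?thesis"
      then have "ereal e < liminf (\<lambda>n. ereal (u n))" by simp
      then have "eventually (\<lambda>n. ereal e < ereal (u n)) sequentially"
        using le_Liminf_iff[of "liminf (\<lambda>n. ereal (u n))" sequentially "\<lambda>n. ereal (u n)"] by auto
      then obtain N where N: "\<And>n. n \<ge> N \<Longrightarrow> e < u n" by (auto simp: eventually_sequentially)
      obtain n where "n \<ge> N" "u n < e" using assms(2)[OF e] by blast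
      then show False using N by force
    qed
  qed
qed

lemma liminf_zeroD:
  fixes u :: "nat \<Rightarrow> real"
  assumes "liminf (\<lambda>n. ereal (u n)) = 0" "e > 0"
  shows "\<exists>n\<ge>N. u n < e"
proof (rule ccontr)
  assume "\<not> ?thesis"
  then have "eventually (\<lambda>n. ereal e \<le> ereal (u n)) sequentially"
    by (auto simp: eventually_sequentially not_less)
  then have "ereal e \<le> liminf (\<lambda>n. ereal (u n))" by (rule Liminf_bounded)
  then show False using assms by simp
qed

lemma recurrent_all:
  assumes f: "Kf-lipschitz_on UNIV f" "f z = z"
    and pw: "\<And>n. C-lipschitz_on UNIV (f ^^ n)"
    and SR: "\<And>A e N. finite A \<Longrightarrow> e > 0 \<Longrightarrow> \<exists>n\<ge>N. \<forall>x\<in>A. dist ((f ^^ n) x) x < e"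
    and m: "\<mu> \<in> FreeSp z"
  shows "\<mu> \<in> RT z (fhat z f)"
proof -
  have C: "C \<ge> 0" using lipschitz_on_nonneg[OF pw] .
  have zn: "(f ^^ n) z = z" for n using funpow_lip[OF f] by blast
  have "liminf (\<lambda>n. ereal (dnorm z ((Top z f ^^ n) \<mu> - \<mu>))) = 0"
  proof (rule liminf_zeroI)
    fix n show "0 \<le> dnorm z ((Top z f ^^ n) \<mu> - \<mu>)"
      unfolding Top_pow[OF f m] by (rule dnorm_nonneg[OF LipDual_diff[OF pull_LipDual[OF FreeSp_LipDual[OF m] pw zn] FreeSp_LipDual[OF m]]])
  next
    fix e :: real and N :: nat assume e: "e > 0"
    have ep: "e / 2 / (C + 1) > 0" using e C by simp
    obtain A c where A: "finite A" "dnorm z (\<mu> - spn z A c id) < e / 2 / (C + 1)"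
      using FreeSp_approx[OF m ep] by blast
    define S where "S = (\<Sum>a\<in>A. \<bar>c a\<bar>)"
    have S: "S \<ge> 0" unfolding S_def by (auto intro: sum_nonneg)
    obtain n where n: "n \<ge> N" "\<forall>x\<in>A. dist ((f ^^ n) x) x < e / 2 / (S + 1)"
      using SR[OF A(1), of "e / 2 / (S + 1)" N] e S by (auto simp: add_nonneg_pos)
    have "dnorm z ((Top z f ^^ n) \<mu> - \<mu>) \<le> (C + 1) * dnorm z (\<mu> - spn z A c id) + (\<Sum>a\<in>A. \<bar>c a\<bar> * dist ((f^^n) a) a)"
      unfolding Top_pow[OF f m] by (rule approx_bound[OF m A(1) pw zn])
    also have "\<dots> \<le> (C + 1) * (e / 2 / (C + 1)) + (\<Sum>a\<in>A. \<bar>c a\<bar> * (e / 2 / (S + 1)))"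
      using A(2) n(2) C by (intro add_mono mult_left_mono sum_mono) auto
    also have "\<dots> = e / 2 + S * (e / 2 / (S + 1))"
    proof -
      have h1: "(C + 1) * (e / 2 / (C + 1)) = e / 2" by (rule mult_div_cancel') (use C in simp)
      have h2: "(\<Sum>a\<in>A. \<bar>c a\<bar> * (e / 2 / (S + 1))) = S * (e / 2 / (S + 1))"
        unfolding S_def by (rule sum_distrib_right[symmetric])
      show ?thesis by (simp only: h1 h2)
    qed
    also have "\<dots> < e / 2 + e / 2" using frac_lt[OF S, of "e/2"] e by linarith
    finally show "\<exists>n\<ge>N. dnorm z ((Top z f ^^ n) \<mu> - \<mu>) < e" using n(1) by auto
  qed
  then show ?thesis unfolding RT_def fhat_eq[OF f] using m by simp
qed

lemma rigid_from_SR: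
  fixes z :: "'a::metric_space" and D :: "'a set"
  assumes f: "Kf-lipschitz_on UNIV f" "f z = z"
    and pw: "\<And>n. C-lipschitz_on UNIV (f ^^ n)"
    and SR: "\<And>A e N. finite A \<Longrightarrow> e > 0 \<Longrightarrow> \<exists>n\<ge>N. \<forall>x\<in>A. dist ((f ^^ n) x) x < e"
    and D: "countable D" "closure D = UNIV"
  shows "rigid_F z (fhat z f)"
proof -
  have C: "C \<ge> 0" using lipschitz_on_nonneg[OF pw] .
  have zn: "(f ^^ n) z = z" for n using funpow_lip[OF f] by blast
  have Dne: "D \<noteq> {}" using D(2) by auto
  define d where "d = from_nat_into D"
  have dD: "range d = D" using range_from_nat_into[OF Dne D(1)] d_def by simp
  define P where "P j n \<longleftrightarrow> (\<forall>i\<le>j. dist ((f ^^ n) (d i)) (d i) < 1 / real (Suc j))" for j n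
  have ex: "\<exists>n\<ge>m. P j n" for j m
    using SR[of "d ` {..j}" "1 / real (Suc j)" m] unfolding P_def by auto
  define r where "r = rec_nat (SOME n. P 0 n) (\<lambda>j rj. SOME n. n \<ge> Suc rj \<and> P (Suc j) n)"
  have r0: "r 0 = (SOME n. P 0 n)" and rS: "r (Suc j) = (SOME n. n \<ge> Suc (r j) \<and> P (Suc j) n)" for j
    by (simp_all add: r_def)
  have Pr: "P j (r j)" for j
  proof (cases j)
    case 0 then show ?thesis using someI_ex[of "P 0"] ex[of 0 0] r0 by auto
  next
    case (Suc k)
    have "r (Suc k) \<ge> Suc (r k) \<and> P (Suc k) (r (Suc k))"
      unfolding rS by (rule someI_ex) (use ex in blast)
    then show ?thesis using Suc by simp
  qed
  have rinc: "r j < r (Suc j)" for j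
  proof -
    have "r (Suc j) \<ge> Suc (r j) \<and> P (Suc j) (r (Suc j))"
      unfolding rS by (rule someI_ex) (use ex in blast)
    then show ?thesis by simp
  qed
  have sm: "strict_mono r" using rinc strict_mono_Suc_iff by blast
  have pt: "(\<lambda>j. dist ((f ^^ r j) x) x) \<longlonglongrightarrow> 0" for x
  proof (rule LIMSEQ_I)
    fix e :: real assume e: "0 < e"
    define \<delta> where "\<delta> = e / 3 / (C + 1)"
    have \<delta>: "\<delta> > 0" using e C by (simp add: \<delta>_def)
    have "x \<in> closure D" using D(2) by simp
    then obtain y where y: "y \<in> D" "dist y x < \<delta>" using closure_approachable \<delta> by blast
    obtain i where i: "y = d i" using y(1) dD by blast
    obtain j0 where j0: "inverse (real (Suc j0)) < e / 3" using reals_Archimedean[of "e/3"] e by auto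
    show "\<exists>no. \<forall>j\<ge>no. norm (dist ((f ^^ r j) x) x - 0) < e"
    proof (intro exI allI impI)
      fix j assume j: "max i j0 \<le> j"
      have "dist ((f ^^ r j) y) y < 1 / real (Suc j)" using Pr[of j] j unfolding P_def i by auto
      also have "\<dots> \<le> inverse (real (Suc j0))" using j by (simp add: inverse_eq_divide frac_le)
      finally have a2: "dist ((f ^^ r j) y) y < e / 3" using j0 by simp
      have a1: "dist ((f ^^ r j) x) ((f ^^ r j) y) \<le> C * dist x y" using lipschitz_onD[OF pw] by blast
      have "dist ((f ^^ r j) x) x \<le> dist ((f ^^ r j) x) ((f ^^ r j) y) + dist ((f ^^ r j) y) y + dist y x"
        using dist_triangle[of "(f ^^ r j) x" x "(f ^^ r j) y"] dist_triangle[of "(f ^^ r j) y" x y] by linarith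
      also have "\<dots> < C * \<delta> + e / 3 + \<delta>"
      proof -
        have "C * dist x y \<le> C * \<delta>" using y(2) C by (simp add: dist_commute mult_left_mono)
        then show ?thesis using a1 a2 y(2) by linarith
      qed
      also have "\<dots> = e / 3 + (C + 1) * \<delta>" by (simp add: algebra_simps)
      also have "\<dots> = e / 3 + e / 3" unfolding \<delta>_def using mult_div_cancel'[of "C + 1" "e / 3"] C by simp
      finally have fx: "dist ((f ^^ r j) x) x < e / 3 + e / 3" .
      have "norm (dist ((f ^^ r j) x) x - 0) = dist ((f ^^ r j) x) x" by simp
      then show "norm (dist ((f ^^ r j) x) x - 0) < e" using fx e by linarith
    qed
  qed
  have conv: "(\<lambda>j. dnorm z ((Top z f ^^ r j) \<mu> - \<mu>)) \<longlonglongrightarrow> 0" if m: "\<mu> \<in> FreeSp z" for \<mu>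
  proof (rule LIMSEQ_I)
    fix e :: real assume e: "0 < e"
    have ep: "e / 2 / (C + 1) > 0" using e C by simp
    obtain A c where A: "finite A" "dnorm z (\<mu> - spn z A c id) < e / 2 / (C + 1)"
      using FreeSp_approx[OF m ep] by blast
    have "(\<lambda>j. \<Sum>a\<in>A. \<bar>c a\<bar> * dist ((f ^^ r j) a) a) \<longlonglongrightarrow> 0"
      by (rule tendsto_null_sum) (rule tendsto_mult_right_zero[OF pt])
    then have "eventually (\<lambda>j. (\<Sum>a\<in>A. \<bar>c a\<bar> * dist ((f ^^ r j) a) a) < e / 2) sequentially"
      using e by (intro order_tendstoD(2)) auto
    then obtain no where no: "\<And>j. j \<ge> no \<Longrightarrow> (\<Sum>a\<in>A. \<bar>c a\<bar> * dist ((f ^^ r j) a) a) < e / 2"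
      by (auto simp: eventually_sequentially)
    show "\<exists>no. \<forall>j\<ge>no. norm (dnorm z ((Top z f ^^ r j) \<mu> - \<mu>) - 0) < e"
    proof (intro exI allI impI)
      fix j assume j: "no \<le> j"
      have nn: "0 \<le> dnorm z ((Top z f ^^ r j) \<mu> - \<mu>)"
        unfolding Top_pow[OF f m] by (rule dnorm_nonneg[OF LipDual_diff[OF pull_LipDual[OF FreeSp_LipDual[OF m] pw zn] FreeSp_LipDual[OF m]]])
      have "dnorm z ((Top z f ^^ r j) \<mu> - \<mu>) \<le> (C + 1) * dnorm z (\<mu> - spn z A c id) + (\<Sum>a\<in>A. \<bar>c a\<bar> * dist ((f ^^ r j) a) a)"
        unfolding Top_pow[OF f m] by (rule approx_bound[OF m A(1) pw zn])
      also have "\<dots> < (C + 1) * (e / 2 / (C + 1)) + e / 2"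
        using A(2) no[OF j] C by (intro add_less_le_mono mult_strict_left_mono) auto
      also have "\<dots> = e"
      proof -
        have h: "(C + 1) * (e / 2 / (C + 1)) = e / 2" by (rule mult_div_cancel') (use C in simp)
        then show ?thesis by linarith
      qed
      finally show "norm (dnorm z ((Top z f ^^ r j) \<mu> - \<mu>) - 0) < e" using nn by simp
    qed
  qed
  show ?thesis unfolding rigid_F_def fhat_eq[OF f] using sm conv by blast
qed




lemma generic_perturb:
  fixes S :: "'a set" and c :: "'a \<Rightarrow> real"
  assumes "finite S" "\<theta> > 0"
  shows "\<exists>c'. (\<forall>a. \<bar>c' a - c a\<bar> < \<theta>) \<and>
    (\<forall>w. (\<forall>a\<in>S. w a \<in> {-1,0,1}) \<longrightarrow> (\<Sum>a\<in>S. w a * c' a) = 0 \<longrightarrow> (\<forall>a\<in>S. w a = 0))"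
  using assms(1)
proof (induction S rule: finite_induct)
  case empty show ?case by (rule exI[of _ c]) (use assms(2) in auto)
next
  case (insert x S)
  obtain c1 where c1: "\<forall>a. \<bar>c1 a - c a\<bar> < \<theta>"
    "\<forall>w. (\<forall>a\<in>S. w a \<in> {-1,0,1}) \<longrightarrow> (\<Sum>a\<in>S. w a * c1 a) = 0 \<longrightarrow> (\<forall>a\<in>S. w a = 0)"
    using insert.IH by blast
  define Bad where "Bad = (\<lambda>w. \<Sum>a\<in>S. w a * c1 a) ` (PiE S (\<lambda>_. {-1,0,1::real}))"
  have fB: "finite (Bad \<union> uminus ` Bad)" unfolding Bad_def
    by (intro finite_UnI finite_imageI finite_PiE insert(1)) auto
  have "infinite ({c x - \<theta> <..< c x + \<theta>} - (Bad \<union> uminus ` Bad))"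
    by (rule Diff_infinite_finite[OF fB]) (use assms(2) in simp)
  then obtain v where v: "v \<in> {c x - \<theta> <..< c x + \<theta>}" "v \<notin> Bad \<union> uminus ` Bad"
    by (metis Diff_iff finite.emptyI ex_in_conv)
  define c' where "c' = c1(x := v)"
  show ?case
  proof (intro exI[of _ c'] conjI allI impI ballI)
    fix a show "\<bar>c' a - c a\<bar> < \<theta>" using c1(1) v(1) by (auto simp: c'_def abs_less_iff)
  next
    fix w a assume w: "\<forall>a\<in>insert x S. w a \<in> {-1,0,1}" and s: "(\<Sum>a\<in>insert x S. w a * c' a) = 0"
      and a: "a \<in> insert x S"
    have sS: "(\<Sum>a\<in>S. w a * c' a) = (\<Sum>a\<in>S. w a * c1 a)"
      using insert(2) by (intro sum.cong) (auto simp: c'_def)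
    have eq: "w x * v + (\<Sum>a\<in>S. w a * c1 a) = 0"
      using s insert(1,2) sS by (simp add: c'_def)
    have inB: "(\<Sum>a\<in>S. w a * c1 a) \<in> Bad"
    proof -
      have r: "restrict w S \<in> PiE S (\<lambda>_. {-1,0,1})" using w by auto
      have "(\<Sum>a\<in>S. w a * c1 a) = (\<Sum>a\<in>S. restrict w S a * c1 a)" by (intro sum.cong) auto
      then show ?thesis unfolding Bad_def using r by blast
    qed
    have wx: "w x = 0"
    proof (rule ccontr)
      assume "w x \<noteq> 0"
      then have "w x = 1 \<or> w x = -1" using w by auto
      then have "v \<in> Bad \<union> uminus ` Bad"
      proof
        assume "w x = 1"
        then have "v = - (\<Sum>a\<in>S. w a * c1 a)" using eq by simp
        then show ?thesis using inB by blast
      next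
        assume "w x = -1"
        then have "v = (\<Sum>a\<in>S. w a * c1 a)" using eq by simp
        then show ?thesis using inB by blast
      qed
      then show False using v(2) by simp
    qed
    then have "(\<Sum>a\<in>S. w a * c1 a) = 0" using eq by simp
    then have "\<forall>a\<in>S. w a = 0" using c1(2) w by auto
    then show "w a = 0" using a wx by auto
  qed
qed

lemma generic_margin:
  fixes S :: "'a set" and c :: "'a \<Rightarrow> real"
  assumes "finite S"
    and gen: "\<forall>w. (\<forall>a\<in>S. w a \<in> {-1,0,1}) \<longrightarrow> (\<Sum>a\<in>S. w a * c a) = 0 \<longrightarrow> (\<forall>a\<in>S. w a = 0)"
  shows "\<exists>\<kappa>>0. \<forall>w. (\<forall>a\<in>S. w a \<in> {-1,0,1}) \<longrightarrow> (\<exists>a\<in>S. w a \<noteq> 0) \<longrightarrow> \<kappa> \<le> \<bar>\<Sum>a\<in>S. w a * c a\<bar>"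
proof -
  define W where "W = {w \<in> PiE S (\<lambda>_. {-1,0,1::real}). \<exists>a\<in>S. w a \<noteq> 0}"
  define V where "V = (\<lambda>w. \<bar>\<Sum>a\<in>S. w a * c a\<bar>) ` W"
  have fW: "finite W" unfolding W_def using finite_PiE[OF assms(1), of "\<lambda>_. {-1,0,1::real}"] by auto
  have fV: "finite V" unfolding V_def using fW by simp
  have pos: "v > 0" if vV: "v \<in> V" for v
  proof -
    obtain w where w: "w \<in> W" "v = \<bar>\<Sum>a\<in>S. w a * c a\<bar>" using vV unfolding V_def by blast
    have "(\<Sum>a\<in>S. w a * c a) \<noteq> 0" using gen w(1) unfolding W_def by (auto simp: PiE_iff)
    then show ?thesis using w by simp
  qed
  have inV: "\<bar>\<Sum>a\<in>S. w a * c a\<bar> \<in> V" if "\<forall>a\<in>S. w a \<in> {-1,0,1}" "\<exists>a\<in>S. w a \<noteq> 0" for w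
  proof -
    have rW: "restrict w S \<in> W" unfolding W_def using that by auto
    have eq: "(\<Sum>a\<in>S. w a * c a) = (\<Sum>a\<in>S. restrict w S a * c a)" by (intro sum.cong) auto
    show ?thesis unfolding V_def by (rule image_eqI[OF _ rW]) (simp only: eq)
  qed
  show ?thesis
  proof (cases "V = {}")
    case True
    then show ?thesis using inV by (intro exI[of _ 1]) auto
  next
    case False
    have \<kappa>: "Min V > 0" using pos Min_in[OF fV False] by auto
    show ?thesis
      by (rule exI[of _ "Min V"]) (use \<kappa> inV fV in auto)
  qed
qed

lemma geo_disj:
  fixes e l t :: real
  assumes "0 \<le> e" "0 \<le> l" "l \<le> 1"
    and "t \<in> {e * l ^ Suc i ..< e * l ^ i}" "t \<in> {e * l ^ Suc j ..< e * l ^ j}"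
  shows "i = j"
proof (rule ccontr)
  assume "i \<noteq> j"
  then consider "i < j" | "j < i" by linarith
  then show False
  proof cases
    case 1
    have "l ^ j \<le> l ^ Suc i" using 1 assms by (intro power_decreasing) auto
    then have "e * l ^ j \<le> e * l ^ Suc i" using assms by (intro mult_left_mono) auto
    then show False using assms by auto
  next
    case 2
    have "l ^ i \<le> l ^ Suc j" using 2 assms by (intro power_decreasing) auto
    then have "e * l ^ i \<le> e * l ^ Suc j" using assms by (intro mult_left_mono) auto
    then show False using assms by auto
  qed
qed

lemma pigeon:
  fixes e l :: real and Dd :: "'a \<Rightarrow> real"
  assumes "finite S" "0 \<le> e" "0 \<le> l" "l \<le> 1"
  shows "\<exists>i\<le>card S. \<forall>a\<in>S. Dd a \<notin> {e * l ^ Suc i ..< e * l ^ i}"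
proof (rule ccontr)
  assume "\<not> ?thesis"
  then have "\<forall>i\<in>{..card S}. \<exists>a\<in>S. Dd a \<in> {e * l ^ Suc i ..< e * l ^ i}" by auto
  then obtain g where g: "\<forall>i\<in>{..card S}. g i \<in> S \<and> Dd (g i) \<in> {e * l ^ Suc i ..< e * l ^ i}"
    by metis
  have "inj_on g {..card S}"
  proof (rule inj_onI)
    fix i j assume ij: "i \<in> {..card S}" "j \<in> {..card S}" "g i = g j"
    have h1: "Dd (g i) \<in> {e * l ^ Suc i ..< e * l ^ i}" using g ij(1) by blast
    have "Dd (g j) \<in> {e * l ^ Suc j ..< e * l ^ j}" using g ij(2) by blast
    then have h2: "Dd (g i) \<in> {e * l ^ Suc j ..< e * l ^ j}" using ij(3) by simp
    show "i = j" by (rule geo_disj[OF assms(2-4) h1 h2])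
  qed
  moreover have "g ` {..card S} \<subseteq> S" using g by auto
  ultimately have "card {..card S} \<le> card S" using card_inj_on_le assms(1) by blast
  then show False by simp
qed

lemma Lip_bump:
  fixes x :: "'a::metric_space"
  shows "1-lipschitz_on UNIV (\<lambda>y. max 0 (s - dist y x))"
proof (rule lipschitz_onI)
  fix y y' :: 'a
  have "\<bar>dist y x - dist y' x\<bar> \<le> dist y y'"
    using abs_dist_diff_le[of y x y'] by (simp add: dist_commute)
  then show "dist (max 0 (s - dist y x)) (max 0 (s - dist y' x)) \<le> 1 * dist y y'"
    by (simp add: dist_real_def max_def abs_if split: if_splits; linarith)
qed simp


lemma key:
  fixes z :: "'a::metric_space" and S :: "'a set" and c :: "'a \<Rightarrow> real"
  assumes f: "Kf-lipschitz_on UNIV f" "f z = z"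
    and S: "finite S" "z \<notin> S"
    and \<kappa>: "\<kappa> > 0" "\<forall>w. (\<forall>a\<in>S. w a \<in> {-1,0,1}) \<longrightarrow> (\<exists>a\<in>S. w a \<noteq> 0) \<longrightarrow> \<kappa> \<le> \<bar>\<Sum>a\<in>S. w a * c a\<bar>"
    and R: "spn z S c id \<in> RT z (fhat z f)"
    and e: "\<epsilon> > 0"
  shows "\<exists>n\<ge>N. \<forall>x\<in>S. dist ((f ^^ n) x) x < \<epsilon>"
proof (cases "S = {}")
  case True then show ?thesis by auto
next
  case False
  define \<nu> where "\<nu> = spn z S c id"
  have nF: "\<nu> \<in> FreeSp z" unfolding \<nu>_def by (rule spn_FreeSp[OF S(1)])
  have "\<nu> \<in> RT z (Top z f)" using R fhat_eq[OF f] \<nu>_def by simp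
  then have "liminf (\<lambda>n. ereal (dnorm z ((Top z f ^^ n) \<nu> - \<nu>))) = 0" unfolding RT_def by simp
  then have lim: "liminf (\<lambda>n. ereal (dnorm z (pull z (f^^n) \<nu> - \<nu>))) = 0"
    using Top_pow[OF f nF] by simp
  define P where "P = insert z S"
  have fP: "finite P" using S(1) P_def by simp
  define Q where "Q = (\<lambda>p. dist (fst p) (snd p)) ` {p \<in> P \<times> P. fst p \<noteq> snd p}"
  have fQ: "finite Q" unfolding Q_def using fP by simp
  obtain a0 where a0: "a0 \<in> S" using False by blast
  have a0z: "a0 \<noteq> z" using a0 S(2) by auto
  have "dist a0 z \<in> Q" unfolding Q_def P_def using a0 a0z
    by (intro image_eqI[of _ _ "(a0, z)"]) auto
  then have neQ: "Q \<noteq> {}" by auto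
  define \<rho> where "\<rho> = Min Q"
  have \<rho>pos: "\<rho> > 0"
  proof -
    have "\<rho> \<in> Q" unfolding \<rho>_def by (rule Min_in[OF fQ neQ])
    then show ?thesis unfolding Q_def by auto
  qed
  have \<rho>le: "\<rho> \<le> dist a b" if "a \<in> P" "b \<in> P" "a \<noteq> b" for a b
  proof -
    have "dist a b \<in> Q" unfolding Q_def using that by (intro image_eqI[of _ _ "(a, b)"]) auto
    then show ?thesis unfolding \<rho>_def using fQ by simp
  qed
  define Sc where "Sc = (\<Sum>a\<in>S. \<bar>c a\<bar>)"
  have Sc: "Sc \<ge> 0" unfolding Sc_def by (auto intro: sum_nonneg)
  define l where "l = min (1/2) (\<kappa> / (2 * (Sc + 1)))"
  have l0: "0 < l" using \<kappa>(1) Sc by (simp add: l_def)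
  have l1: "l < 1" by (simp add: l_def)
  have lSc: "l * Sc \<le> \<kappa> / 2"
  proof -
    have "l * Sc \<le> \<kappa> / (2 * (Sc + 1)) * Sc" using Sc by (intro mult_right_mono) (auto simp: l_def)
    also have "\<dots> = \<kappa> / 2 * (Sc / (Sc + 1))" by simp
    also have "\<dots> \<le> \<kappa> / 2 * 1" using Sc \<kappa>(1) by (intro mult_left_mono) auto
    finally show ?thesis by simp
  qed
  define \<epsilon>0 where "\<epsilon>0 = min \<epsilon> \<rho>"
  have \<epsilon>0: "0 < \<epsilon>0" "\<epsilon>0 \<le> \<epsilon>" "\<epsilon>0 \<le> \<rho>" using e \<rho>pos by (auto simp: \<epsilon>0_def)
  define k where "k = card S"
  define sm where "sm = \<epsilon>0 * l ^ k"
  have sm: "sm > 0" using \<epsilon>0 l0 by (simp add: sm_def)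
  define \<eta> where "\<eta> = sm * \<kappa> / 4"
  have \<eta>: "\<eta> > 0" using sm \<kappa>(1) by (simp add: \<eta>_def)
  obtain n where n: "n \<ge> N" "dnorm z (pull z (f^^n) \<nu> - \<nu>) < \<eta>"
    using liminf_zeroD[OF lim \<eta>] by blast
  have Kn: "(Kf^n)-lipschitz_on UNIV (f^^n)" "(f^^n) z = z" using funpow_lip[OF f] by blast+
  define m where "m = pull z (f^^n) \<nu> - \<nu>"
  have Lm: "m \<in> LipDual z" unfolding m_def
    by (rule LipDual_diff[OF pull_LipDual[OF FreeSp_LipDual[OF nF] Kn] FreeSp_LipDual[OF nF]])
  have m\<phi>: "m \<phi> = (\<Sum>a\<in>S. c a * (\<phi> ((f^^n) a) - \<phi> a))" if p: "\<phi> \<in> Lip0 z" for \<phi>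
  proof -
    have pg: "\<phi> \<circ> (f^^n) \<in> Lip0 z" using Lip0_comp(1)[OF p Kn] .
    have "m \<phi> = spn z S c id (\<phi> \<circ> (f^^n)) - spn z S c id \<phi>" using p by (simp add: m_def \<nu>_def pull_def)
    also have "\<dots> = (\<Sum>a\<in>S. c a * (\<phi> ((f^^n) a) - \<phi> a))"
      unfolding spn_apply[OF pg] spn_apply[OF p] by (simp add: sum_subtractf right_diff_distrib)
    finally show ?thesis .
  qed
  show ?thesis
  proof (intro exI[of _ n] conjI ballI n(1))
    fix x assume x: "x \<in> S"
    define Dd where "Dd a = dist ((f^^n) a) x" for a
    obtain i where i: "i \<le> k" "\<forall>a\<in>S. Dd a \<notin> {\<epsilon>0 * l ^ Suc i ..< \<epsilon>0 * l ^ i}"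
      using pigeon[OF S(1), of \<epsilon>0 l Dd] \<epsilon>0 l0 l1 unfolding k_def by auto
    define s where "s = \<epsilon>0 * l ^ i"
    have s0: "0 < s" using \<epsilon>0 l0 by (simp add: s_def)
    have sle: "s \<le> \<epsilon>0"
    proof -
      have "l ^ i \<le> 1" using l0 l1 by (intro power_le_one) auto
      then show ?thesis unfolding s_def using \<epsilon>0 by (simp add: mult_left_le)
    qed
    have smle: "sm \<le> s"
    proof -
      have "l ^ k \<le> l ^ i" using l0 l1 i(1) by (intro power_decreasing) auto
      then show ?thesis unfolding s_def sm_def using \<epsilon>0 by (intro mult_left_mono) auto
    qed
    have ls: "l * s = \<epsilon>0 * l ^ Suc i" by (simp add: s_def)
    have lss: "l * s < s" using l1 s0 by simp
    have farS: "s \<le> dist a x" if "a \<in> S" "a \<noteq> x" for a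
      using \<rho>le[of a x] that x sle \<epsilon>0 unfolding P_def by auto
    have zx: "z \<noteq> x" using x S(2) by auto
    have farz: "s \<le> dist z x"
      using \<rho>le[of z x] zx x sle \<epsilon>0 unfolding P_def by auto
    have close: "Dd x < l * s"
    proof (rule ccontr)
      assume Dx: "\<not> Dd x < l * s"
      define \<phi> where "\<phi> = (\<lambda>y. max 0 (s - dist y x))"
      have \<phi>lip: "1-lipschitz_on UNIV \<phi>" unfolding \<phi>_def by (rule Lip_bump)
      have \<phi>z: "\<phi> z = 0" using farz by (simp add: \<phi>_def)
      have \<phi>L: "\<phi> \<in> Lip0 z" unfolding Lip0_def using \<phi>lip \<phi>z by blast
      have \<phi>1: "Lip \<phi> \<le> 1" using Lip_le[OF \<phi>lip] .
      have \<phi>a: "\<phi> a = (if a = x then s else 0)" if "a \<in> S" for a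
        using farS[OF that] s0 by (auto simp: \<phi>_def)
      have \<phi>fa: "\<phi> ((f^^n) a) = (if Dd a < l * s then s - Dd a else 0)" if "a \<in> S" for a
      proof (cases "Dd a < l * s")
        case True then show ?thesis using lss by (simp add: \<phi>_def Dd_def)
      next
        case False
        then have "\<epsilon>0 * l ^ Suc i \<le> Dd a" using ls by simp
        then have "\<not> Dd a < s" using i(2) that unfolding s_def by auto
        then show ?thesis using False by (simp add: \<phi>_def Dd_def)
      qed
      define w where "w a = (if Dd a < l * s then 1 else 0) - (if a = x then 1 else (0::real))" for a
      have wv: "\<forall>a\<in>S. w a \<in> {-1,0,1}" using Dx by (auto simp: w_def)
      have wx: "w x \<noteq> 0" using Dx by (simp add: w_def)
      have gen: "\<kappa> \<le> \<bar>\<Sum>a\<in>S. w a * c a\<bar>" using \<kappa>(2) wv wx x by blast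
      define E where "E = (\<Sum>a\<in>S. c a * (if Dd a < l * s then Dd a else 0))"
      have mv: "m \<phi> = s * (\<Sum>a\<in>S. w a * c a) - E"
      proof -
        have "m \<phi> = (\<Sum>a\<in>S. c a * (\<phi> ((f^^n) a) - \<phi> a))" by (rule m\<phi>[OF \<phi>L])
        also have "\<dots> = (\<Sum>a\<in>S. s * (w a * c a) - c a * (if Dd a < l * s then Dd a else 0))"
          by (rule sum.cong) (auto simp: \<phi>a \<phi>fa w_def algebra_simps)
        also have "\<dots> = s * (\<Sum>a\<in>S. w a * c a) - E" by (simp add: E_def sum_subtractf sum_distrib_left)
        finally show ?thesis .
      qed
      have Eb: "\<bar>E\<bar> \<le> l * s * Sc"
      proof -
        have "\<bar>E\<bar> \<le> (\<Sum>a\<in>S. \<bar>c a * (if Dd a < l * s then Dd a else 0)\<bar>)" unfolding E_def by (rule sum_abs)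
        also have "\<dots> \<le> (\<Sum>a\<in>S. \<bar>c a\<bar> * (l * s))"
        proof (rule sum_mono)
          fix a
          have "\<bar>if Dd a < l * s then Dd a else 0\<bar> \<le> l * s" using s0 l0 by (auto simp: Dd_def)
          then show "\<bar>c a * (if Dd a < l * s then Dd a else 0)\<bar> \<le> \<bar>c a\<bar> * (l * s)"
            unfolding abs_mult by (rule mult_left_mono) simp
        qed
        also have "\<dots> = l * s * Sc" unfolding Sc_def sum_distrib_left by (simp add: mult_ac)
        finally show ?thesis .
      qed
      have mb: "\<bar>m \<phi>\<bar> < \<eta>"
      proof -
        have "\<bar>m \<phi>\<bar> \<le> dnorm z m * Lip \<phi>" by (rule dnorm_bound[OF Lm \<phi>L])
        also have "\<dots> \<le> dnorm z m" using \<phi>1 dnorm_nonneg[OF Lm] Lip0_nonneg[OF \<phi>L] by (simp add: mult_left_le)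
        also have "\<dots> < \<eta>" using n(2) m_def by simp
        finally show ?thesis .
      qed
      have "s * \<kappa> \<le> s * \<bar>\<Sum>a\<in>S. w a * c a\<bar>" using gen s0 by (intro mult_left_mono) auto
      also have "\<dots> = \<bar>s * (\<Sum>a\<in>S. w a * c a)\<bar>" using s0 by (simp add: abs_mult)
      also have "\<dots> \<le> \<bar>m \<phi>\<bar> + \<bar>E\<bar>"
      proof -
        have "s * (\<Sum>a\<in>S. w a * c a) = m \<phi> + E" using mv by simp
        then show ?thesis by (simp add: abs_triangle_ineq)
      qed
      also have "\<dots> < \<eta> + l * s * Sc" using mb Eb by linarith
      also have "\<dots> \<le> \<eta> + s * (\<kappa> / 2)"
      proof -
        have "l * s * Sc = s * (l * Sc)" by simp
        also have "\<dots> \<le> s * (\<kappa> / 2)" using lSc s0 by (intro mult_left_mono) auto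
        finally show ?thesis by simp
      qed
      finally have A: "s * \<kappa> < \<eta> + s * (\<kappa> / 2)" .
      have B: "\<eta> \<le> s * \<kappa> / 4" unfolding \<eta>_def using smle \<kappa>(1) by (simp add: mult_right_mono divide_right_mono)
      have C: "s * \<kappa> > 0" using s0 \<kappa>(1) by simp
      show False using A B C by linarith
    qed
    then show "dist ((f ^^ n) x) x < \<epsilon>" using lss sle \<epsilon>0 unfolding Dd_def by linarith
  qed
qed




lemma SR_from_interior:
  fixes z :: "'a::metric_space"
  assumes f: "Kf-lipschitz_on UNIV f" "f z = z" and int: "F_interior z (RT z (fhat z f)) \<noteq> {}"
    and A: "finite A" and e: "\<epsilon> > 0"
  shows "\<exists>n\<ge>N. \<forall>x\<in>A. dist ((f^^n) x) x < \<epsilon>"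
proof -
  obtain \<mu>1 where m1: "\<mu>1 \<in> F_interior z (RT z (fhat z f))" using int by blast
  obtain r where r: "r > 0" "\<And>\<nu>. \<nu> \<in> FreeSp z \<Longrightarrow> dnorm z (\<nu> - \<mu>1) < r \<Longrightarrow> \<nu> \<in> RT z (fhat z f)"
    and m1F: "\<mu>1 \<in> FreeSp z"
    using m1 unfolding F_interior_def by blast
  have r2: "r / 2 > 0" using r(1) by simp
  obtain A0 c0 where A0: "finite A0" "dnorm z (\<mu>1 - spn z A0 c0 id) < r / 2"
    using FreeSp_approx[OF m1F r2] by blast
  define S where "S = (A0 \<union> A) - {z}"
  have S: "finite S" "z \<notin> S" using A0(1) A by (auto simp: S_def)
  define c where "c a = (if a \<in> A0 then c0 a else 0)" for a
  have eq0: "spn z A0 c0 id = spn z S c id"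
  proof
    fix \<phi> show "spn z A0 c0 id \<phi> = spn z S c id \<phi>"
    proof (cases "\<phi> \<in> Lip0 z")
      case False then show ?thesis by (simp add: spn_out)
    next
      case True
      have z0: "\<phi> z = 0" using True unfolding Lip0_def by auto
      have "(\<Sum>a\<in>S. c a * \<phi> a) = (\<Sum>a\<in>S. if a \<in> A0 then c0 a * \<phi> a else 0)"
        by (intro sum.cong) (auto simp: c_def)
      also have "\<dots> = (\<Sum>a\<in>S \<inter> A0. c0 a * \<phi> a)" by (rule sum.inter_restrict[symmetric, OF S(1)])
      also have "S \<inter> A0 = A0 - {z}" by (auto simp: S_def)
      also have "(\<Sum>a\<in>A0 - {z}. c0 a * \<phi> a) = (\<Sum>a\<in>A0. c0 a * \<phi> a)"
        using sum_diff1[OF A0(1), of "\<lambda>a. c0 a * \<phi> a" z] z0 by simp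
      finally show ?thesis using True by (simp add: spn_apply)
    qed
  qed
  define Dz where "Dz = (\<Sum>a\<in>S. dist a z)"
  have Dz: "Dz \<ge> 0" unfolding Dz_def by (auto intro: sum_nonneg)
  define \<theta> where "\<theta> = r / 2 / (Dz + 1)"
  have \<theta>: "\<theta> > 0" using r(1) Dz by (simp add: \<theta>_def)
  obtain c' where c': "\<forall>a. \<bar>c' a - c a\<bar> < \<theta>"
    "\<forall>w. (\<forall>a\<in>S. w a \<in> {-1,0,1}) \<longrightarrow> (\<Sum>a\<in>S. w a * c' a) = 0 \<longrightarrow> (\<forall>a\<in>S. w a = 0)"
    using generic_perturb[OF S(1) \<theta>] by blast
  obtain \<kappa> where \<kappa>: "\<kappa> > 0" "\<forall>w. (\<forall>a\<in>S. w a \<in> {-1,0,1}) \<longrightarrow> (\<exists>a\<in>S. w a \<noteq> 0) \<longrightarrow> \<kappa> \<le> \<bar>\<Sum>a\<in>S. w a * c' a\<bar>"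
    using generic_margin[OF S(1) c'(2)] by blast
  define \<nu> where "\<nu> = spn z S c' id"
  have nF: "\<nu> \<in> FreeSp z" unfolding \<nu>_def by (rule spn_FreeSp[OF S(1)])
  have d1: "\<nu> - spn z S c id = spn z S (\<lambda>a. c' a - c a) id"
  proof
    fix \<phi> show "(\<nu> - spn z S c id) \<phi> = spn z S (\<lambda>a. c' a - c a) id \<phi>"
      by (cases "\<phi> \<in> Lip0 z") (simp_all add: \<nu>_def spn_apply spn_out sum_subtractf left_diff_distrib)
  qed
  have "dnorm z (\<nu> - spn z S c id) \<le> (\<Sum>a\<in>S. \<bar>c' a - c a\<bar> * dist (id a) z)"
    unfolding d1 by (rule spn_dnorm[OF S(1)])
  also have "\<dots> \<le> (\<Sum>a\<in>S. \<theta> * dist a z)"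
  proof (rule sum_mono)
    fix a
    have "\<bar>c' a - c a\<bar> \<le> \<theta>" using c'(1) less_imp_le by blast
    then show "\<bar>c' a - c a\<bar> * dist (id a) z \<le> \<theta> * dist a z" by (simp add: mult_right_mono)
  qed
  also have "\<dots> = \<theta> * Dz" by (simp add: Dz_def sum_distrib_left)
  also have "\<dots> = Dz * (r / 2 / (Dz + 1))" by (simp add: \<theta>_def)
  also have "\<dots> < r / 2" by (rule frac_lt[OF Dz r2])
  finally have d2: "dnorm z (\<nu> - spn z S c id) < r / 2" .
  have Ln: "\<nu> - spn z S c id \<in> LipDual z" using LipDual_diff[OF FreeSp_LipDual[OF nF] spn_LipDual[OF S(1)]] .
  have Lm: "\<mu>1 - spn z S c id \<in> LipDual z" using LipDual_diff[OF FreeSp_LipDual[OF m1F] spn_LipDual[OF S(1)]] .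
  have "\<nu> - \<mu>1 = (\<nu> - spn z S c id) - (\<mu>1 - spn z S c id)" by (simp add: fun_eq_iff)
  then have "dnorm z (\<nu> - \<mu>1) \<le> dnorm z (\<nu> - spn z S c id) + dnorm z (\<mu>1 - spn z S c id)"
    using dnorm_diff_le[OF Ln Lm] by simp
  also have "\<dots> < r / 2 + r / 2" using d2 A0(2) eq0 by simp
  finally have "dnorm z (\<nu> - \<mu>1) < r" by simp
  then have R: "spn z S c' id \<in> RT z (fhat z f)" using r(2)[OF nF] \<nu>_def by simp
  obtain n where n: "n \<ge> N" "\<forall>x\<in>S. dist ((f ^^ n) x) x < \<epsilon>"
    using key[OF f S \<kappa> R e] by blast
  have "(f ^^ n) z = z" using funpow_lip[OF f] by blast
  then have "\<forall>x\<in>A. dist ((f ^^ n) x) x < \<epsilon>" using n(2) e by (auto simp: S_def)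
  then show ?thesis using n(1) by blast
qed

theorem corollary3p8:
  fixes z :: "'a::metric_space" and f :: "'a \<Rightarrow> 'a"
  assumes "complete (UNIV :: 'a set)"
    and "f \<in> LipMaps0 z"
    and "F_interior z (RT z (fhat z f)) \<noteq> {}"
    and "\<exists>C>0. \<forall>n. Lip (f ^^ n) \<le> C"
  shows "RT z (fhat z f) = FreeSp z \<and>
         ((\<exists>D::'a set. countable D \<and> closure D = UNIV) \<longrightarrow> rigid_F z (fhat z f))"
proof -
  obtain Kf where f: "Kf-lipschitz_on UNIV f" "f z = z" using assms(2) unfolding LipMaps0_def by blast
  obtain C where C: "C > 0" "\<And>n. Lip (f ^^ n) \<le> C" using assms(4) by blast
  have pw: "C-lipschitz_on UNIV (f ^^ n)" for n
  proof -
    have "(Kf ^ n)-lipschitz_on UNIV (f ^^ n)" using funpow_lip[OF f] by blast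
    then have "(Lip (f ^^ n))-lipschitz_on UNIV (f ^^ n)" by (rule Lip_lip)
    then show ?thesis using C(2)[of n] by (rule lipschitz_on_le)
  qed
  have SR: "\<exists>n\<ge>N. \<forall>x\<in>A. dist ((f ^^ n) x) x < e" if "finite A" "e > 0" for A e N
    using SR_from_interior[OF f assms(3) that] .
  have "RT z (fhat z f) = FreeSp z"
  proof
    show "RT z (fhat z f) \<subseteq> FreeSp z" unfolding RT_def by auto
    show "FreeSp z \<subseteq> RT z (fhat z f)" using recurrent_all[OF f pw SR] by blast
  qed
  moreover have "rigid_F z (fhat z f)" if "countable D" "closure D = UNIV" for D :: "'a set"
    by (rule rigid_from_SR[OF f pw SR that])
  ultimately show ?thesis by blast
qed


end
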